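(* (Outer bound under full secrecy for arbitrary channels.) For an arbitrary (not necessarily degraded) secure ISAC channel with action-dependent states $P_{S_1S_2|A}$, $P_{Y_1Y_2|S_1S_2X}$, every tuple $(R,D_1,D_2)\in\mathcal R_{\mathrm{Act}}$ satisfies: there exists a pmf $P_{AX}$ such that, under $P_{AXY_1Y_2S_1S_2}=P_{AX}P_{S_1S_2|A}P_{Y_1Y_2|S_1S_2X}$, $$R\le\min\{H(Y_1,S_1|Y_2,S_2)-H(S_1|Y_1,Y_2,S_2,X,A),\ I(X,A;Y_1,S_1)\}$$ and $D_j\ge\mathbb E[d_j(S_j,\mathsf{Est}_j(A,X,Y_1,Y_2))]$ for $j=1,2$, where $\mathsf{Est}_j(a,x,y_1,y_2)\in\operatorname{argmin}_{\tilde s\in\widehat{\mathcal S}_j}\sum_{s_j}P_{S_j|AXY_1Y_2}(s_j|a,x,y_1,y_2)d_j(s_j,\tilde s)$.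
   Context: Model (secure ISAC with transmitter actions and perfect output feedback). Fix finite sets $\mathcal A,\mathcal X,\mathcal S_1,\mathcal S_2,\mathcal Y_1,\mathcal Y_2,\widehat{\mathcal S}_1,\widehat{\mathcal S}_2$, a conditional pmf $P_{S_1S_2|A}$ (action-dependent states) and a memoryless channel $P_{Y_1Y_2|S_1S_2X}$. Let $d_j:\mathcal S_j\times\widehat{\mathcal S}_j\to[0,\infty)$, $j=1,2$, be bounded distortion functions, extended to sequences by $d_j(s^n,\hat s^n)=\frac1n\sum_{i=1}^n d_j(s_i,\hat s_i)$. A full-secrecy code of blocklength $n$ consists of: a finite message set $\mathcal M$, with message $M$ uniform on $\mathcal M$; an action encoder that, for $i=1,\dots,n$, outputs $A_i\in\mathcal A$ as a (possibly randomized) function of $(M,Z^{i-1})$; a channel encoder that outputs $X_i\in\mathcal X$ as a (possibly randomized) function of $(M,A_i,Z^{i-1})$, where $Z_i=(Y_{1,i},Y_{2,i})$ is perfect strictly causal output feedback; at each time $i$, given $(A_i,X_i)$ and all past variables, $(S_{1,i},S_{2,i})\sim P_{S_1S_2|A}(\cdot|A_i)$ and then $(Y_{1,i},Y_{2,i})\sim P_{Y_1Y_2|S_1S_2X}(\cdot|S_{1,i},S_{2,i},X_i)$; a decoder $\widehat M=\mathsf{Dec}(Y_1^n,S_1^n)$; and state estimators $\widehat{S}_j^n=\mathsf{Est}_j(X^n,A^n,Y_1^n,Y_2^n)$, $j=1,2$. The eavesdropper observes $(Y_2^n,S_2^n)$. Full secrecy: a tuple $(R,D_1,D_2)$ is achievable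 if for every $\delta>0$ there exist $n\ge1$ and a code with $\frac1n\log|\mathcal M|\ge R-\delta$, $\Pr[M\ne\widehat M]\le\delta$, $I(M;Y_2^n,S_2^n)\le\delta$, and $\mathbb E[d_j(S_j^n,\widehat S_j^n)]\le D_j+\delta$ ($j=1,2$). $\mathcal R_{\mathrm{Act}}$ is the closure of the set of achievable tuples. *)

theory Defs
  imports "HOL-Probability.Probability"
begin

definition ent :: "'a pmf \<Rightarrow> real" where
  "ent p = - (\<Sum>v\<in>set_pmf p. pmf p v * log 2 (pmf p v))"

definition cent :: "('u \<times> 'v) pmf \<Rightarrow> real" where
  "cent p = ent p - ent (map_pmf snd p)"

definition minf :: "('u \<times> 'v) pmf \<Rightarrow> real" where
  "minf p = ent (map_pmf fst p) + ent (map_pmf snd p) - ent p"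

text \<open>Conditional pmf P(v|u) from a joint pmf of (U,V) (equal to 0 where P(u)=0).\<close>
definition cpmf :: "('u \<times> 'v) pmf \<Rightarrow> 'u \<Rightarrow> 'v \<Rightarrow> real" where
  "cpmf q u v = pmf q (u, v) / pmf (map_pmf fst q) u"

definition bayes_est :: "('u \<times> 'v::finite) pmf \<Rightarrow> ('v \<Rightarrow> 'e \<Rightarrow> real) \<Rightarrow> ('u \<Rightarrow> 'e) \<Rightarrow> bool" where
  "bayes_est q d e \<longleftrightarrow> (\<forall>u t. (\<Sum>v\<in>UNIV. cpmf q u v * d v (e u)) \<le> (\<Sum>v\<in>UNIV. cpmf q u v * d v t))"

datatype ('a,'x,'s1,'s2,'y1,'y2) sym =
  Sym (sA: 'a) (sX: 'x) (sS1: 's1) (sS2: 's2) (sY1: 'y1) (sY2: 'y2)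

definition joint1 ::
  "('a \<Rightarrow> ('s1 \<times> 's2) pmf) \<Rightarrow> ('s1 \<Rightarrow> 's2 \<Rightarrow> 'x \<Rightarrow> ('y1 \<times> 'y2) pmf) \<Rightarrow> ('a \<times> 'x) pmf
    \<Rightarrow> ('a,'x,'s1,'s2,'y1,'y2) sym pmf" where
  "joint1 PS W P = do { ax \<leftarrow> P; s \<leftarrow> PS (fst ax); y \<leftarrow> W (fst s) (snd s) (snd ax);
       return_pmf (Sym (fst ax) (snd ax) (fst s) (snd s) (fst y) (snd y)) }"

text \<open>A code: message count K (message uniform on {..<K}); private encoder randomness
  T ~ PT (independent of M, shared over time by both encoders);
  action encoder A_i = f M Z^{i-1} T; channel encoder X_i = g M A_i Z^{i-1} T;
  decoder dec Y1^n S1^n; estimators Shat_{j,i} = est_j i X^n A^n Y1^n Y2^n.\<close>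

definition traj_step ::
  "('a \<Rightarrow> ('s1 \<times> 's2) pmf) \<Rightarrow> ('s1 \<Rightarrow> 's2 \<Rightarrow> 'x \<Rightarrow> ('y1 \<times> 'y2) pmf)
   \<Rightarrow> (nat \<Rightarrow> ('y1 \<times> 'y2) list \<Rightarrow> nat \<Rightarrow> 'a)
   \<Rightarrow> (nat \<Rightarrow> 'a \<Rightarrow> ('y1 \<times> 'y2) list \<Rightarrow> nat \<Rightarrow> 'x)
   \<Rightarrow> nat \<Rightarrow> nat \<Rightarrow> ('a,'x,'s1,'s2,'y1,'y2) sym list \<Rightarrow> ('a,'x,'s1,'s2,'y1,'y2) sym list pmf" where
  "traj_step PS W f g m tk h =
     (let zs = map (\<lambda>c. (sY1 c, sY2 c)) h; a = f m zs tk; x = g m a zs tk in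
      do { s \<leftarrow> PS a; y \<leftarrow> W (fst s) (snd s) x;
           return_pmf (h @ [Sym a x (fst s) (snd s) (fst y) (snd y)]) })"

primrec traj ::
  "('a \<Rightarrow> ('s1 \<times> 's2) pmf) \<Rightarrow> ('s1 \<Rightarrow> 's2 \<Rightarrow> 'x \<Rightarrow> ('y1 \<times> 'y2) pmf)
   \<Rightarrow> (nat \<Rightarrow> ('y1 \<times> 'y2) list \<Rightarrow> nat \<Rightarrow> 'a)
   \<Rightarrow> (nat \<Rightarrow> 'a \<Rightarrow> ('y1 \<times> 'y2) list \<Rightarrow> nat \<Rightarrow> 'x)
   \<Rightarrow> nat \<Rightarrow> nat \<Rightarrow> nat \<Rightarrow> ('a,'x,'s1,'s2,'y1,'y2) sym list pmf" where
  "traj PS W f g m tk 0 = return_pmf []"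
| "traj PS W f g m tk (Suc n) = bind_pmf (traj PS W f g m tk n) (traj_step PS W f g m tk)"

definition code_dist ::
  "('a \<Rightarrow> ('s1 \<times> 's2) pmf) \<Rightarrow> ('s1 \<Rightarrow> 's2 \<Rightarrow> 'x \<Rightarrow> ('y1 \<times> 'y2) pmf) \<Rightarrow> nat \<Rightarrow> nat \<Rightarrow> nat pmf
   \<Rightarrow> (nat \<Rightarrow> ('y1 \<times> 'y2) list \<Rightarrow> nat \<Rightarrow> 'a)
   \<Rightarrow> (nat \<Rightarrow> 'a \<Rightarrow> ('y1 \<times> 'y2) list \<Rightarrow> nat \<Rightarrow> 'x)
   \<Rightarrow> (nat \<times> nat \<times> ('a,'x,'s1,'s2,'y1,'y2) sym list) pmf" where
  "code_dist PS W n K PT f g = do { m \<leftarrow> pmf_of_set {..<K}; tk \<leftarrow> PT;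
       h \<leftarrow> traj PS W f g m tk n; return_pmf (m, tk, h) }"

definition seq_dist :: "nat \<Rightarrow> ('s \<Rightarrow> 'e \<Rightarrow> real) \<Rightarrow> (nat \<Rightarrow> 's) \<Rightarrow> (nat \<Rightarrow> 'e) \<Rightarrow> real" where
  "seq_dist n d s e = (1 / real n) * (\<Sum>i<n. d (s i) (e i))"

definition achievable ::
  "('a \<Rightarrow> ('s1 \<times> 's2) pmf) \<Rightarrow> ('s1 \<Rightarrow> 's2 \<Rightarrow> 'x \<Rightarrow> ('y1 \<times> 'y2) pmf)
   \<Rightarrow> ('s1 \<Rightarrow> 'e1 \<Rightarrow> real) \<Rightarrow> ('s2 \<Rightarrow> 'e2 \<Rightarrow> real) \<Rightarrow> real \<times> real \<times> real \<Rightarrow> bool" where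
  "achievable PS W d1 d2 RD \<longleftrightarrow> (case RD of (R, D1, D2) \<Rightarrow>
     (\<forall>\<delta>>0. \<exists>n K PT f g dec
        (est1 :: nat \<Rightarrow> 'x list \<Rightarrow> 'a list \<Rightarrow> 'y1 list \<Rightarrow> 'y2 list \<Rightarrow> 'e1)
        (est2 :: nat \<Rightarrow> 'x list \<Rightarrow> 'a list \<Rightarrow> 'y1 list \<Rightarrow> 'y2 list \<Rightarrow> 'e2).
        let P = code_dist PS W n K PT f g in
        n \<ge> 1 \<and> K \<ge> 1 \<and>
        log 2 (real K) / real n \<ge> R - \<delta> \<and>
        measure_pmf.prob P {(m, tk, h). dec (map sY1 h) (map sS1 h) \<noteq> m} \<le> \<delta> \<and>
        minf (map_pmf (\<lambda>(m, tk, h). (m, (map sY2 h, map sS2 h))) P) \<le> \<delta> \<and>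
        measure_pmf.expectation P (\<lambda>(m, tk, h). seq_dist n d1 (\<lambda>i. sS1 (h ! i))
            (\<lambda>i. est1 i (map sX h) (map sA h) (map sY1 h) (map sY2 h))) \<le> D1 + \<delta> \<and>
        measure_pmf.expectation P (\<lambda>(m, tk, h). seq_dist n d2 (\<lambda>i. sS2 (h ! i))
            (\<lambda>i. est2 i (map sX h) (map sA h) (map sY1 h) (map sY2 h))) \<le> D2 + \<delta>))"

definition R_Act ::
  "('a \<Rightarrow> ('s1 \<times> 's2) pmf) \<Rightarrow> ('s1 \<Rightarrow> 's2 \<Rightarrow> 'x \<Rightarrow> ('y1 \<times> 'y2) pmf)
   \<Rightarrow> ('s1 \<Rightarrow> 'e1 \<Rightarrow> real) \<Rightarrow> ('s2 \<Rightarrow> 'e2 \<Rightarrow> real) \<Rightarrow> (real \<times> real \<times> real) set" where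
  "R_Act PS W d1 d2 = closure {RD. achievable PS W d1 d2 RD}"

end

theory Submission
  imports Defs "HOL-Real_Asymp.Real_Asymp"
begin


lemma log2_zero[simp]: "log 2 (0::real) = 0" by (simp add: log_def)

lemma pmf_map_fin:
  assumes "finite (set_pmf Q)"
  shows "pmf (map_pmf f Q) v = (\<Sum>w\<in>set_pmf Q. if f w = v then pmf Q w else 0)"
proof -
  have "pmf (map_pmf f Q) v = measure_pmf.prob Q (f -` {v} \<inter> set_pmf Q)"
    by (simp add: pmf_map measure_Int_set_pmf)
  also have "\<dots> = sum (pmf Q) (f -` {v} \<inter> set_pmf Q)"
    using assms by (simp add: measure_measure_pmf_finite)
  also have "f -` {v} \<inter> set_pmf Q = {w\<in>set_pmf Q. f w = v}" by auto
  also have "sum (pmf Q) {w\<in>set_pmf Q. f w = v} = (\<Sum>w\<in>set_pmf Q. if f w = v then pmf Q w else 0)"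
    using assms by (simp add: sum.inter_filter)
  finally show ?thesis .
qed

lemma ent_expect:
  assumes fin: "finite (set_pmf Q)"
  shows "ent (map_pmf f Q) = - (\<Sum>w\<in>set_pmf Q. pmf Q w * log 2 (pmf (map_pmf f Q) (f w)))"
proof -
  let ?p = "pmf (map_pmf f Q)"
  have "(\<Sum>v\<in>set_pmf (map_pmf f Q). ?p v * log 2 (?p v))
      = (\<Sum>v\<in>f ` set_pmf Q. (\<Sum>w\<in>{w\<in>set_pmf Q. f w = v}. pmf Q w) * log 2 (?p v))"
    using fin by (simp add: pmf_map_fin sum.inter_filter)
  also have "\<dots> = (\<Sum>v\<in>f ` set_pmf Q. (\<Sum>w\<in>{w\<in>set_pmf Q. f w = v}. pmf Q w * log 2 (?p (f w))))"
    by (auto simp: sum_distrib_right intro!: sum.cong)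
  also have "\<dots> = (\<Sum>w\<in>set_pmf Q. pmf Q w * log 2 (?p (f w)))"
    using fin by (intro sum.group) auto
  finally show ?thesis unfolding ent_def by simp
qed

lemma gibbs_ln:
  fixes q r :: "'w \<Rightarrow> real"
  assumes fin: "finite S" and q0: "\<And>w. w \<in> S \<Longrightarrow> 0 \<le> q w" and q1: "sum q S = 1"
    and r0: "\<And>w. w \<in> S \<Longrightarrow> 0 < r w"
  shows "(\<Sum>w\<in>S. q w * ln (r w)) \<le> ln (\<Sum>w\<in>S. q w * r w)"
proof -
  define Rs where "Rs = (\<Sum>w\<in>S. q w * r w)"
  obtain w0 where w0: "w0 \<in> S" "q w0 > 0"
  proof -
    have "\<exists>w\<in>S. q w \<noteq> 0" using q1 by (metis sum.neutral zero_neq_one)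
    then show ?thesis using q0 that by (metis less_eq_real_def)
  qed
  have "Rs \<ge> q w0 * r w0" unfolding Rs_def
    using w0 fin q0 r0 by (intro member_le_sum) (simp_all add: less_imp_le)
  moreover have "q w0 * r w0 > 0" using w0 r0 by simp
  ultimately have Rpos: "Rs > 0" by linarith
  have "(\<Sum>w\<in>S. q w * ln (r w)) = (\<Sum>w\<in>S. q w * ln (r w / Rs)) + (\<Sum>w\<in>S. q w) * ln Rs"
  proof -
    have "q w * ln (r w) = q w * ln (r w / Rs) + q w * ln Rs" if "w \<in> S" for w
      using Rpos r0[OF that] by (simp add: ln_div algebra_simps)
    then have "(\<Sum>w\<in>S. q w * ln (r w)) = (\<Sum>w\<in>S. q w * ln (r w / Rs) + q w * ln Rs)"
      by (rule sum.cong[OF refl])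
    then show ?thesis by (simp add: sum.distrib sum_distrib_right)
  qed
  also have "(\<Sum>w\<in>S. q w * ln (r w / Rs)) \<le> (\<Sum>w\<in>S. q w * (r w / Rs - 1))"
    using q0 r0 Rpos by (intro sum_mono mult_left_mono ln_le_minus_one) auto
  also have "(\<Sum>w\<in>S. q w * (r w / Rs - 1)) = Rs / Rs - 1"
  proof -
    have "(\<Sum>w\<in>S. q w * (r w / Rs - 1)) = (\<Sum>w\<in>S. q w * r w / Rs - q w)"
      by (simp add: right_diff_distrib)
    also have "\<dots> = (\<Sum>w\<in>S. q w * r w) / Rs - sum q S"
      by (simp add: sum_subtractf sum_divide_distrib)
    finally show ?thesis using q1 unfolding Rs_def by simp
  qed
  finally show ?thesis using Rpos q1 Rs_def by simp
qed

lemma gibbs_log2: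
  fixes q r :: "'w \<Rightarrow> real"
  assumes "finite S" "\<And>w. w \<in> S \<Longrightarrow> 0 \<le> q w" "sum q S = 1" "\<And>w. w \<in> S \<Longrightarrow> 0 < r w"
  shows "(\<Sum>w\<in>S. q w * log 2 (r w)) \<le> log 2 (\<Sum>w\<in>S. q w * r w)"
proof -
  have "(\<Sum>w\<in>S. q w * log 2 (r w)) = (\<Sum>w\<in>S. q w * ln (r w)) / ln 2"
    by (simp add: log_def sum_divide_distrib)
  also have "\<dots> \<le> ln (\<Sum>w\<in>S. q w * r w) / ln 2"
    using gibbs_ln[OF assms] by (simp add: divide_right_mono)
  finally show ?thesis by (simp add: log_def)
qed


lemma pmf_map_fin':
  assumes "finite (set_pmf Q)"
  shows "pmf (map_pmf f Q) v = sum (pmf Q) {w\<in>set_pmf Q. f w = v}"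
  using assms by (simp add: pmf_map_fin sum.inter_filter)

lemma expect_group:
  assumes fin: "finite (set_pmf Q)"
  shows "(\<Sum>w\<in>set_pmf Q. pmf Q w * G (F w)) = (\<Sum>t\<in>F ` set_pmf Q. pmf (map_pmf F Q) t * G t)"
proof -
  have "(\<Sum>w\<in>set_pmf Q. pmf Q w * G (F w)) = (\<Sum>t\<in>F ` set_pmf Q. \<Sum>w\<in>{w\<in>set_pmf Q. F w = t}. pmf Q w * G (F w))"
    using fin by (intro sum.group[symmetric]) auto
  also have "\<dots> = (\<Sum>t\<in>F ` set_pmf Q. pmf (map_pmf F Q) t * G t)"
    using fin by (auto simp: pmf_map_fin' sum_distrib_right intro!: sum.cong)
  finally show ?thesis .
qed

lemma pmf_map_pos:
  assumes "w \<in> set_pmf Q" shows "pmf (map_pmf F Q) (F w) > 0"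
  using assms by (simp add: pmf_positive)

lemma marg_sum:
  assumes fin: "finite (set_pmf Q)"
  shows "(\<Sum>a\<in>A ` set_pmf Q. pmf (map_pmf (\<lambda>w. (A w, C w)) Q) (a, c)) = pmf (map_pmf C Q) c"
proof -
  have "(\<Sum>a\<in>A ` set_pmf Q. pmf (map_pmf (\<lambda>w. (A w, C w)) Q) (a, c))
      = (\<Sum>a\<in>A ` set_pmf Q. \<Sum>w\<in>set_pmf Q. if A w = a \<and> C w = c then pmf Q w else 0)"
    using fin by (simp add: pmf_map_fin)
  also have "\<dots> = (\<Sum>w\<in>set_pmf Q. \<Sum>a\<in>A ` set_pmf Q. if A w = a \<and> C w = c then pmf Q w else 0)"
    by (rule sum.swap)
  also have "\<dots> = (\<Sum>w\<in>set_pmf Q. if C w = c then pmf Q w else 0)"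
  proof (intro sum.cong refl)
    fix w assume w: "w \<in> set_pmf Q"
    show "(\<Sum>a\<in>A ` set_pmf Q. if A w = a \<and> C w = c then pmf Q w else 0) = (if C w = c then pmf Q w else 0)"
      using fin w by (cases "C w = c") (simp_all add: sum.delta)
  qed
  also have "\<dots> = pmf (map_pmf C Q) c" using fin by (simp add: pmf_map_fin)
  finally show ?thesis .
qed

lemma total_sum:
  assumes fin: "finite (set_pmf Q)"
  shows "(\<Sum>c\<in>C ` set_pmf Q. pmf (map_pmf C Q) c) = 1"
proof -
  have "(\<Sum>c\<in>C ` set_pmf Q. pmf (map_pmf C Q) c) = (\<Sum>c\<in>set_pmf (map_pmf C Q). pmf (map_pmf C Q) c)"
    by simp
  also have "\<dots> = 1" using fin by (simp add: sum_pmf_eq_1)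
  finally show ?thesis .
qed

lemma sum_pmf_fin1: "finite (set_pmf Q) \<Longrightarrow> sum (pmf Q) (set_pmf Q) = 1"
  by (simp add: sum_pmf_eq_1)

lemma submod:
  assumes fin: "finite (set_pmf Q)"
  shows "ent (map_pmf (\<lambda>w. (A w, B w, C w)) Q) + ent (map_pmf C Q)
       \<le> ent (map_pmf (\<lambda>w. (A w, C w)) Q) + ent (map_pmf (\<lambda>w. (B w, C w)) Q)"
proof -
  let ?S = "set_pmf Q"
  define F where "F = (\<lambda>w. (A w, B w, C w))"
  define Pabc where "Pabc = pmf (map_pmf F Q)"
  define Pac where "Pac = (\<lambda>a c. pmf (map_pmf (\<lambda>w. (A w, C w)) Q) (a, c))"
  define Pbc where "Pbc = (\<lambda>b c. pmf (map_pmf (\<lambda>w. (B w, C w)) Q) (b, c))"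
  define Pc where "Pc = pmf (map_pmf C Q)"
  define r where "r = (\<lambda>w. Pac (A w) (C w) * Pbc (B w) (C w) / (Pabc (F w) * Pc (C w)))"
  have pos: "Pabc (F w) > 0" "Pac (A w) (C w) > 0" "Pbc (B w) (C w) > 0" "Pc (C w) > 0"
    if "w \<in> ?S" for w
    using that unfolding Pabc_def Pac_def Pbc_def Pc_def
    by (auto intro: pmf_map_pos[of w Q "\<lambda>w. (A w, C w)", simplified]
       pmf_map_pos[of w Q "\<lambda>w. (B w, C w)", simplified] pmf_map_pos)
  have rpos: "r w > 0" if "w \<in> ?S" for w using pos[OF that] unfolding r_def by simp
  have diff: "(ent (map_pmf F Q) + ent (map_pmf C Q)) - (ent (map_pmf (\<lambda>w. (A w, C w)) Q) + ent (map_pmf (\<lambda>w. (B w, C w)) Q))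
     = (\<Sum>w\<in>?S. pmf Q w * log 2 (r w))"
  proof -
    have eq: "log 2 (r w) = log 2 (Pac (A w) (C w)) + log 2 (Pbc (B w) (C w)) - log 2 (Pabc (F w)) - log 2 (Pc (C w))"
      if "w \<in> ?S" for w
      using pos[OF that] unfolding r_def by (simp add: log_mult log_divide)
    have "pmf Q w * log 2 (r w) = pmf Q w * log 2 (Pac (A w) (C w)) + pmf Q w * log 2 (Pbc (B w) (C w))
        - pmf Q w * log 2 (Pabc (F w)) - pmf Q w * log 2 (Pc (C w))" if "w \<in> ?S" for w
      unfolding eq[OF that] by (simp add: algebra_simps)
    then have "(\<Sum>w\<in>?S. pmf Q w * log 2 (r w)) = (\<Sum>w\<in>?S. pmf Q w * log 2 (Pac (A w) (C w)))
       + (\<Sum>w\<in>?S. pmf Q w * log 2 (Pbc (B w) (C w))) - (\<Sum>w\<in>?S. pmf Q w * log 2 (Pabc (F w)))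
       - (\<Sum>w\<in>?S. pmf Q w * log 2 (Pc (C w)))"
      by (simp add: sum.distrib sum_subtractf)
    then show ?thesis
      using fin unfolding Pac_def Pbc_def Pabc_def Pc_def
      by (simp add: ent_expect[OF fin])
  qed
  have "(\<Sum>w\<in>?S. pmf Q w * r w) = (\<Sum>t\<in>F ` ?S. Pabc t * (Pac (fst t) (snd (snd t)) * Pbc (fst (snd t)) (snd (snd t)) / (Pabc t * Pc (snd (snd t)))))"
    unfolding r_def Pabc_def using expect_group[OF fin, of "\<lambda>t. Pac (fst t) (snd (snd t)) * Pbc (fst (snd t)) (snd (snd t)) / (pmf (map_pmf F Q) t * Pc (snd (snd t)))" F]
    by (simp add: F_def)
  also have "\<dots> = (\<Sum>t\<in>F ` ?S. Pac (fst t) (snd (snd t)) * Pbc (fst (snd t)) (snd (snd t)) / Pc (snd (snd t)))"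
  proof (intro sum.cong refl)
    fix t assume "t \<in> F ` ?S"
    then obtain w where "w \<in> ?S" "t = F w" by auto
    then have "Pabc t > 0" using pos by auto
    then show "Pabc t * (Pac (fst t) (snd (snd t)) * Pbc (fst (snd t)) (snd (snd t)) / (Pabc t * Pc (snd (snd t))))
       = Pac (fst t) (snd (snd t)) * Pbc (fst (snd t)) (snd (snd t)) / Pc (snd (snd t))" by simp
  qed
  also have "\<dots> \<le> (\<Sum>t\<in>A ` ?S \<times> B ` ?S \<times> C ` ?S. Pac (fst t) (snd (snd t)) * Pbc (fst (snd t)) (snd (snd t)) / Pc (snd (snd t)))"
    using fin by (intro sum_mono2) (auto simp: F_def Pac_def Pbc_def Pc_def)
  also have "\<dots> = (\<Sum>a\<in>A ` ?S. \<Sum>b\<in>B ` ?S. \<Sum>c\<in>C ` ?S. Pac a c * Pbc b c / Pc c)"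
    by (simp add: sum.cartesian_product split_beta)
  also have "\<dots> = (\<Sum>c\<in>C ` ?S. (\<Sum>a\<in>A ` ?S. Pac a c) * (\<Sum>b\<in>B ` ?S. Pbc b c) / Pc c)"
  proof -
    have "(\<Sum>c\<in>C ` ?S. (\<Sum>a\<in>A ` ?S. Pac a c) * (\<Sum>b\<in>B ` ?S. Pbc b c) / Pc c)
        = (\<Sum>c\<in>C ` ?S. \<Sum>a\<in>A ` ?S. \<Sum>b\<in>B ` ?S. Pac a c * Pbc b c / Pc c)"
      by (simp add: sum_product sum_divide_distrib)
    also have "\<dots> = (\<Sum>a\<in>A ` ?S. \<Sum>c\<in>C ` ?S. \<Sum>b\<in>B ` ?S. Pac a c * Pbc b c / Pc c)"
      by (rule sum.swap)
    also have "\<dots> = (\<Sum>a\<in>A ` ?S. \<Sum>b\<in>B ` ?S. \<Sum>c\<in>C ` ?S. Pac a c * Pbc b c / Pc c)"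
      by (intro sum.cong refl sum.swap)
    finally show ?thesis by simp
  qed
  also have "\<dots> = (\<Sum>c\<in>C ` ?S. Pc c)"
  proof (intro sum.cong refl)
    fix c assume c: "c \<in> C ` ?S"
    have "(\<Sum>a\<in>A ` ?S. Pac a c) = Pc c" unfolding Pac_def Pc_def by (rule marg_sum[OF fin])
    moreover have "(\<Sum>b\<in>B ` ?S. Pbc b c) = Pc c" unfolding Pbc_def Pc_def by (rule marg_sum[OF fin])
    moreover have "Pc c > 0" using c pos by auto
    ultimately show "(\<Sum>a\<in>A ` ?S. Pac a c) * (\<Sum>b\<in>B ` ?S. Pbc b c) / Pc c = Pc c" by simp
  qed
  also have "\<dots> = 1" unfolding Pc_def by (rule total_sum[OF fin])
  finally have sum1: "(\<Sum>w\<in>?S. pmf Q w * r w) \<le> 1" .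
  have "(\<Sum>w\<in>?S. pmf Q w * log 2 (r w)) \<le> log 2 (\<Sum>w\<in>?S. pmf Q w * r w)"
    using fin rpos by (intro gibbs_log2) (auto simp: sum_pmf_fin1)
  also have "\<dots> \<le> 0"
  proof -
    have "(\<Sum>w\<in>?S. pmf Q w * r w) > 0"
    proof -
      obtain w where "w \<in> ?S" using set_pmf_not_empty[of Q] by blast
      then have "pmf Q w * r w > 0" using rpos by (simp add: pmf_positive)
      moreover have "pmf Q w * r w \<le> (\<Sum>w\<in>?S. pmf Q w * r w)"
        using fin \<open>w \<in> ?S\<close> rpos by (intro member_le_sum) (simp_all add: less_imp_le)
      ultimately show ?thesis by linarith
    qed
    then show ?thesis using sum1 by simp
  qed
  finally show ?thesis using diff unfolding F_def by linarith
qed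


lemma pmf_map_le_det:
  assumes fin: "finite (set_pmf Q)" and det: "\<And>w. w \<in> set_pmf Q \<Longrightarrow> f w = \<phi> (g w)"
    and w: "w \<in> set_pmf Q"
  shows "pmf (map_pmf g Q) (g w) \<le> pmf (map_pmf f Q) (f w)"
  unfolding pmf_map_fin'[OF fin]
  using fin det w by (intro sum_mono2) auto

lemma ent_map_le:
  assumes fin: "finite (set_pmf Q)" and det: "\<And>w. w \<in> set_pmf Q \<Longrightarrow> f w = \<phi> (g w)"
  shows "ent (map_pmf f Q) \<le> ent (map_pmf g Q)"
proof -
  have "(\<Sum>w\<in>set_pmf Q. pmf Q w * log 2 (pmf (map_pmf g Q) (g w))) \<le> (\<Sum>w\<in>set_pmf Q. pmf Q w * log 2 (pmf (map_pmf f Q) (f w)))"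
  proof (intro sum_mono mult_left_mono)
    fix w assume w: "w \<in> set_pmf Q"
    show "log 2 (pmf (map_pmf g Q) (g w)) \<le> log 2 (pmf (map_pmf f Q) (f w))"
      using pmf_map_le_det[where f=f and g=g and \<phi>=\<phi>, OF fin det w] pmf_map_pos[OF w, of g] pmf_map_pos[OF w, of f]
      by simp
  qed simp
  then show ?thesis by (simp add: ent_expect[OF fin])
qed

lemma ent_map_eq:
  assumes fin: "finite (set_pmf Q)" and d1: "\<And>w. w \<in> set_pmf Q \<Longrightarrow> f w = \<phi> (g w)"
    and d2: "\<And>w. w \<in> set_pmf Q \<Longrightarrow> g w = \<psi> (f w)"
  shows "ent (map_pmf f Q) = ent (map_pmf g Q)"
  using ent_map_le[where f=f and g=g and \<phi>=\<phi>, OF fin d1] ent_map_le[where f=g and g=f and \<phi>=\<psi>, OF fin d2] by linarith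

lemma cond_mono:
  assumes fin: "finite (set_pmf Q)" and det: "\<And>w. w \<in> set_pmf Q \<Longrightarrow> V' w = \<psi> (V w)"
  shows "ent (map_pmf (\<lambda>w. (U w, V w)) Q) - ent (map_pmf V Q) \<le> ent (map_pmf (\<lambda>w. (U w, V' w)) Q) - ent (map_pmf V' Q)"
proof -
  have s: "ent (map_pmf (\<lambda>w. (U w, V w, V' w)) Q) + ent (map_pmf V' Q)
       \<le> ent (map_pmf (\<lambda>w. (U w, V' w)) Q) + ent (map_pmf (\<lambda>w. (V w, V' w)) Q)"
    by (rule submod[OF fin])
  have e1: "ent (map_pmf (\<lambda>w. (U w, V w, V' w)) Q) = ent (map_pmf (\<lambda>w. (U w, V w)) Q)"
    using det by (intro ent_map_eq[OF fin, where \<phi>="\<lambda>(u,v). (u, v, \<psi> v)" and \<psi>="\<lambda>(u,v,v'). (u,v)"]) auto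
  have e2: "ent (map_pmf (\<lambda>w. (V w, V' w)) Q) = ent (map_pmf V Q)"
    using det by (intro ent_map_eq[OF fin, where \<phi>="\<lambda>v. (v, \<psi> v)" and \<psi>="fst"]) auto
  show ?thesis using s e1 e2 by linarith
qed

lemma cond_nonneg:
  assumes fin: "finite (set_pmf Q)"
  shows "ent (map_pmf V Q) \<le> ent (map_pmf (\<lambda>w. (U w, V w)) Q)"
  by (rule ent_map_le[OF fin, where \<phi>=snd]) auto

lemma ent_card_le:
  assumes fin: "finite (set_pmf Q)"
  shows "ent (map_pmf f Q) \<le> log 2 (card (f ` set_pmf Q))"
proof -
  let ?S = "set_pmf Q" and ?p = "pmf (map_pmf f Q)"
  have "ent (map_pmf f Q) = (\<Sum>w\<in>?S. pmf Q w * log 2 (1 / ?p (f w)))"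
  proof -
    have "pmf Q w * log 2 (1 / ?p (f w)) = - (pmf Q w * log 2 (?p (f w)))" if "w \<in> ?S" for w
      using pmf_map_pos[OF that, of f] by (simp add: log_divide)
    then show ?thesis by (simp add: ent_expect[OF fin] sum_negf)
  qed
  also have "\<dots> \<le> log 2 (\<Sum>w\<in>?S. pmf Q w * (1 / ?p (f w)))"
    using fin pmf_map_pos[of _ Q f] by (intro gibbs_log2) (auto simp: sum_pmf_fin1)
  also have "(\<Sum>w\<in>?S. pmf Q w * (1 / ?p (f w))) = (\<Sum>t\<in>f ` ?S. ?p t * (1 / ?p t))"
    by (rule expect_group[OF fin])
  also have "\<dots> = (\<Sum>t\<in>f ` ?S. 1)"
    using pmf_map_pos[of _ Q f] by (intro sum.cong) force+
  finally show ?thesis by simp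
qed


lemma gibbs_sub:
  fixes q r :: "'w \<Rightarrow> real"
  assumes fin: "finite S" and q0: "\<And>w. w \<in> S \<Longrightarrow> 0 < q w" and ne: "S \<noteq> {}"
    and r0: "\<And>w. w \<in> S \<Longrightarrow> 0 < r w"
  shows "(\<Sum>w\<in>S. q w * log 2 (r w)) \<le> sum q S * log 2 ((\<Sum>w\<in>S. q w * r w) / sum q S)"
proof -
  define Z where "Z = sum q S"
  have Zpos: "Z > 0" unfolding Z_def using fin ne q0 by (intro sum_pos) auto
  have "(\<Sum>w\<in>S. (q w / Z) * log 2 (r w)) \<le> log 2 (\<Sum>w\<in>S. (q w / Z) * r w)"
    using fin q0 r0 Zpos by (intro gibbs_log2) (auto simp: Z_def sum_divide_distrib[symmetric] less_imp_le)
  then have "(\<Sum>w\<in>S. q w * log 2 (r w)) / Z \<le> log 2 ((\<Sum>w\<in>S. q w * r w) / Z)"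
    by (simp add: sum_divide_distrib[symmetric])
  then show ?thesis using Zpos unfolding Z_def[symmetric] by (simp add: divide_le_eq mult.commute)
qed

lemma prob_fin:
  assumes fin: "finite (set_pmf Q)"
  shows "measure_pmf.prob Q {w. E w} = sum (pmf Q) {w\<in>set_pmf Q. E w}"
proof -
  have "measure_pmf.prob Q {w. E w} = measure_pmf.prob Q ({w. E w} \<inter> set_pmf Q)"
    by (simp add: measure_Int_set_pmf)
  also have "{w. E w} \<inter> set_pmf Q = {w\<in>set_pmf Q. E w}" by auto
  finally show ?thesis using fin by (simp add: measure_measure_pmf_finite)
qed

lemma fano:
  fixes M :: "'w \<Rightarrow> nat"
  assumes fin: "finite (set_pmf Q)" and Mlt: "\<And>w. w \<in> set_pmf Q \<Longrightarrow> M w < K"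
  shows "ent (map_pmf (\<lambda>w. (M w, V w)) Q) - ent (map_pmf V Q)
      \<le> ent (map_pmf (\<lambda>w. dec (V w) \<noteq> M w) Q) + measure_pmf.prob Q {w. dec (V w) \<noteq> M w} * log 2 (real K)"
proof -
  let ?S = "set_pmf Q"
  define E where "E w = (dec (V w) \<noteq> M w)" for w
  define M' where "M' w = (if E w then M w else K)" for w
  define Pe where "Pe = measure_pmf.prob Q {w. E w}"
  define S1 where "S1 = {w\<in>?S. E w}"
  have Pe_sum: "Pe = sum (pmf Q) S1" unfolding Pe_def S1_def by (rule prob_fin[OF fin])
  obtain w0 where w0: "w0 \<in> ?S" using set_pmf_not_empty[of Q] by blast
  have K1: "K \<ge> 1" using Mlt[OF w0] by simp
  have logK: "log 2 (real K) \<ge> 0" using K1 by simp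
  have st1: "ent (map_pmf (\<lambda>w. (M w, V w)) Q) \<le> ent (map_pmf (\<lambda>w. (M' w, E w, V w)) Q)"
    by (rule ent_map_le[OF fin, where \<phi>="\<lambda>(m',e,v). (if e then m' else dec v, v)"])
       (auto simp: M'_def E_def)
  have st3: "ent (map_pmf (\<lambda>w. (M' w, E w, V w)) Q) - ent (map_pmf (\<lambda>w. (E w, V w)) Q)
      \<le> ent (map_pmf (\<lambda>w. (M' w, E w)) Q) - ent (map_pmf E Q)"
    using cond_mono[OF fin, of "\<lambda>w. E w" fst "\<lambda>w. (E w, V w)" M'] by simp
  have st4: "ent (map_pmf (\<lambda>w. (E w, V w)) Q) - ent (map_pmf V Q) \<le> ent (map_pmf E Q)"
  proof -
    have "ent (map_pmf (\<lambda>w. (E w, V w)) Q) - ent (map_pmf V Q)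
        \<le> ent (map_pmf (\<lambda>w. (E w, ())) Q) - ent (map_pmf (\<lambda>w. ()) Q)"
      by (rule cond_mono[OF fin, where \<psi>="\<lambda>_. ()"]) simp
    also have "ent (map_pmf (\<lambda>w. (E w, ())) Q) = ent (map_pmf E Q)"
      by (rule ent_map_eq[OF fin, where \<phi>="\<lambda>e. (e, ())" and \<psi>=fst]) auto
    also have "ent (map_pmf (\<lambda>w. ()) Q) = 0"
      by (simp add: ent_def map_pmf_const)
    finally show ?thesis by simp
  qed
  have st5: "ent (map_pmf (\<lambda>w. (M' w, E w)) Q) - ent (map_pmf E Q) \<le> Pe * log 2 (real K)"
  proof -
    let ?F = "\<lambda>w. (M' w, E w)"
    let ?PF = "pmf (map_pmf ?F Q)" and ?PE = "pmf (map_pmf E Q)"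
    define t where "t w = pmf Q w * log 2 (?PE (E w) / ?PF (?F w))" for w
    have diff: "ent (map_pmf ?F Q) - ent (map_pmf E Q) = (\<Sum>w\<in>?S. t w)"
    proof -
      have "t w = pmf Q w * log 2 (?PE (E w)) - pmf Q w * log 2 (?PF (?F w))" if "w \<in> ?S" for w
        unfolding t_def using pmf_map_pos[OF that, of E] pmf_map_pos[OF that, of ?F]
        by (simp add: log_divide algebra_simps)
      then show ?thesis by (simp add: ent_expect[OF fin] sum_subtractf)
    qed
    have t0: "t w = 0" if "w \<in> ?S" "\<not> E w" for w
    proof -
      have "?PF (?F w) = ?PE (E w)"
        unfolding pmf_map_fin'[OF fin] using that Mlt by (intro sum.cong) (auto simp: M'_def)
      then show ?thesis unfolding t_def using pmf_map_pos[OF that(1), of E] by simp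
    qed
    have "(\<Sum>w\<in>?S. t w) = (\<Sum>w\<in>?S. if E w then t w else 0)"
      using t0 by (intro sum.cong) auto
    also have "\<dots> = (\<Sum>w\<in>S1. t w)" unfolding S1_def using fin by (simp add: sum.inter_filter)
    finally have tsum: "(\<Sum>w\<in>?S. t w) = (\<Sum>w\<in>S1. t w)" .
    show ?thesis
    proof (cases "S1 = {}")
      case True
      then show ?thesis using diff tsum Pe_sum by simp
    next
      case False
      have PEw: "?PE (E w) = Pe" if "w \<in> S1" for w
        using that unfolding Pe_sum pmf_map_fin'[OF fin] S1_def by (intro sum.cong) auto
      have finS1: "finite S1" using fin unfolding S1_def by simp
      have "(\<Sum>w\<in>S1. t w) = (\<Sum>w\<in>S1. pmf Q w * log 2 (?PE (E w) / ?PF (?F w)))" unfolding t_def ..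
      also have "\<dots> \<le> sum (pmf Q) S1 * log 2 ((\<Sum>w\<in>S1. pmf Q w * (?PE (E w) / ?PF (?F w))) / sum (pmf Q) S1)"
      proof (rule gibbs_sub[OF finS1 _ False])
        fix w assume "w \<in> S1"
        then have w: "w \<in> ?S" unfolding S1_def by simp
        show "0 < pmf Q w" using w by (simp add: pmf_positive)
        show "0 < ?PE (E w) / ?PF (?F w)" using pmf_map_pos[OF w, of E] pmf_map_pos[OF w, of ?F] by simp
      qed
      also have "(\<Sum>w\<in>S1. pmf Q w * (?PE (E w) / ?PF (?F w))) = Pe * (\<Sum>w\<in>S1. pmf Q w * (1 / ?PF (?F w)))"
        using PEw by (simp add: sum_distrib_left mult.commute)
      also have "(\<Sum>w\<in>S1. pmf Q w * (1 / ?PF (?F w))) = (\<Sum>w\<in>?S. pmf Q w * (\<lambda>x. if snd x then 1 / ?PF x else 0) (?F w))"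
        unfolding S1_def using fin by (simp add: sum.inter_filter if_distrib cong: if_cong)
      also have "\<dots> = (\<Sum>x\<in>?F ` ?S. ?PF x * (if snd x then 1 / ?PF x else 0))"
        by (rule expect_group[OF fin])
      also have "\<dots> = (\<Sum>x\<in>?F ` ?S. if snd x then 1 else 0)"
        using pmf_map_pos[of _ Q ?F] by (intro sum.cong) force+
      also have "\<dots> = real (card {x\<in>?F ` ?S. snd x})"
        using fin by (simp add: sum.inter_filter[symmetric])
      finally have A: "(\<Sum>w\<in>S1. t w) \<le> Pe * log 2 (Pe * real (card {x\<in>?F ` ?S. snd x}) / Pe)"
        using Pe_sum by simp
      have Ppos: "Pe > 0" unfolding Pe_sum using finS1 False
        by (intro sum_pos) (auto simp: S1_def pmf_positive)
      have cardle: "card {x\<in>?F ` ?S. snd x} \<le> K"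
      proof -
        have "{x\<in>?F ` ?S. snd x} \<subseteq> (\<lambda>m. (m, True)) ` {..<K}"
          using Mlt by (auto simp: M'_def image_iff)
        then have "card {x\<in>?F ` ?S. snd x} \<le> card ((\<lambda>m. (m, True)) ` {..<K})"
          by (intro card_mono) auto
        also have "\<dots> \<le> K" using card_image_le[of "{..<K}" "\<lambda>m. (m, True)"] by simp
        finally show ?thesis .
      qed
      have cpos: "card {x\<in>?F ` ?S. snd x} > 0"
      proof -
        obtain w where "w \<in> S1" using False by blast
        then have "?F w \<in> {x\<in>?F ` ?S. snd x}" unfolding S1_def by auto
        then show ?thesis using fin by (auto simp: card_gt_0_iff)
      qed
      have "log 2 (Pe * real (card {x\<in>?F ` ?S. snd x}) / Pe) \<le> log 2 (real K)"
        using Ppos cardle cpos by simp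
      then have "Pe * log 2 (Pe * real (card {x\<in>?F ` ?S. snd x}) / Pe) \<le> Pe * log 2 (real K)"
        using Ppos by (simp add: mult_left_mono)
      then show ?thesis using A diff tsum by linarith
    qed
  qed
  have "ent (map_pmf (\<lambda>w. (M w, V w)) Q) - ent (map_pmf V Q) \<le> ent (map_pmf E Q) + Pe * log 2 (real K)"
    using st1 st3 st4 st5 by linarith
  then show ?thesis unfolding Pe_def E_def .
qed

definition hb :: "real \<Rightarrow> real" where
  "hb p = - (p * log 2 p + (1 - p) * log 2 (1 - p))"

lemma ent_bool:
  fixes E :: "'w \<Rightarrow> bool"
  shows "ent (map_pmf E Q) = hb (measure_pmf.prob Q {w. E w})"
proof -
  let ?p = "map_pmf E Q"
  have pT: "pmf ?p True = measure_pmf.prob Q {w. E w}" by (simp add: pmf_map vimage_def)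
  have pF: "pmf ?p False = 1 - measure_pmf.prob Q {w. E w}"
  proof -
    have "pmf ?p False = measure_pmf.prob Q (- {w. E w})" by (simp add: pmf_map vimage_def Compl_eq)
    also have "\<dots> = 1 - measure_pmf.prob Q {w. E w}"
      using measure_pmf.prob_compl[of "{w. E w}" Q] by (simp add: Compl_eq_Diff_UNIV)
    finally show ?thesis .
  qed
  have "ent ?p = - (\<Sum>v\<in>UNIV. pmf ?p v * log 2 (pmf ?p v))"
    unfolding ent_def by (intro arg_cong[where f=uminus] sum.mono_neutral_left) (auto simp: set_pmf_eq)
  also have "\<dots> = hb (measure_pmf.prob Q {w. E w})"
    unfolding hb_def UNIV_bool using pT pF by simp
  finally show ?thesis .
qed


definition kform :: "('v \<times> 'u) pmf \<Rightarrow> ('v \<Rightarrow> 'u pmf) \<Rightarrow> bool" where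
  "kform D k \<longleftrightarrow> D = bind_pmf (map_pmf fst D) (\<lambda>v. map_pmf (Pair v) (k v))"

lemma pmf_kbind: "pmf (bind_pmf L (\<lambda>v. map_pmf (Pair v) (k v))) (v, u) = pmf L v * pmf (k v) u"
proof -
  have eq: "pmf (map_pmf (Pair v') (k v')) (v, u) = indicator {v} v' * pmf (k v) u" for v'
  proof (cases "v' = v")
    case True
    then show ?thesis by (simp add: pmf_map_inj' inj_on_def)
  next
    case False
    then have "(v, u) \<notin> set_pmf (map_pmf (Pair v') (k v'))" by auto
    then show ?thesis using False by (simp add: set_pmf_eq)
  qed
  show ?thesis unfolding pmf_bind eq by (simp add: measure_pmf_single)
qed

lemma kform_pmf: "kform D k \<Longrightarrow> pmf D (v, u) = pmf (map_pmf fst D) v * pmf (k v) u"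
  unfolding kform_def by (metis pmf_kbind)

lemma kformI_pmf:
  assumes "\<And>v u. pmf D (v, u) = pmf (map_pmf fst D) v * pmf (k v) u"
  shows "kform D k"
  unfolding kform_def by (rule pmf_eqI) (auto simp: pmf_kbind assms)

lemma kform_map_snd:
  assumes "kform D k"
  shows "kform (map_pmf (\<lambda>(v, u). (v, g u)) D) (\<lambda>v. map_pmf g (k v))"
proof -
  have D: "D = bind_pmf (map_pmf fst D) (\<lambda>v. map_pmf (Pair v) (k v))" using assms unfolding kform_def .
  have "map_pmf fst (map_pmf (\<lambda>(v, u). (v, g u)) D) = map_pmf fst D"
    by (simp add: map_pmf_comp split_beta)
  moreover have "map_pmf (\<lambda>(v, u). (v, g u)) D = bind_pmf (map_pmf fst D) (\<lambda>v. map_pmf (Pair v) (map_pmf g (k v)))"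
    by (subst D) (simp add: map_bind_pmf map_pmf_comp)
  ultimately show ?thesis unfolding kform_def by simp
qed

lemma kform_marg:
  assumes "kform D k" and kk: "\<And>v. v \<in> set_pmf (map_pmf fst D) \<Longrightarrow> k v = k' (\<psi> v)"
  shows "kform (map_pmf (\<lambda>(v, u). (\<psi> v, u)) D) k'"
proof -
  have D: "D = bind_pmf (map_pmf fst D) (\<lambda>v. map_pmf (Pair v) (k v))" using assms(1) unfolding kform_def .
  have m: "map_pmf fst (map_pmf (\<lambda>(v, u). (\<psi> v, u)) D) = map_pmf \<psi> (map_pmf fst D)"
    by (simp add: map_pmf_comp split_beta)
  have "map_pmf (\<lambda>(v, u). (\<psi> v, u)) D = bind_pmf (map_pmf fst D) (\<lambda>v. map_pmf (Pair (\<psi> v)) (k v))"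
    by (subst D) (simp add: map_bind_pmf map_pmf_comp)
  also have "\<dots> = bind_pmf (map_pmf fst D) (\<lambda>v. map_pmf (Pair (\<psi> v)) (k' (\<psi> v)))"
    using kk by (intro bind_pmf_cong) auto
  also have "\<dots> = bind_pmf (map_pmf \<psi> (map_pmf fst D)) (\<lambda>v. map_pmf (Pair v) (k' v))"
    by (simp add: bind_map_pmf)
  finally show ?thesis unfolding kform_def m .
qed

definition bpost :: "('u1 \<times> 'u2) pmf \<Rightarrow> 'u2 \<Rightarrow> 'u1 pmf" where
  "bpost p u2 = map_pmf fst (cond_pmf p {x. snd x = u2})"

lemma bpost_pmf: "pmf (map_pmf snd p) u2 * pmf (bpost p u2) u1 = pmf p (u1, u2)"
proof (cases "pmf (map_pmf snd p) u2 = 0")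
  case True
  have "pmf p (u1, u2) \<le> pmf (map_pmf snd p) u2"
    by (simp add: pmf_map pmf.rep_eq measure_pmf.finite_measure_mono)
  then show ?thesis using True pmf_nonneg[of p "(u1,u2)"] by simp
next
  case False
  let ?A = "{x. snd x = u2}"
  have mA: "measure_pmf.prob p ?A = pmf (map_pmf snd p) u2" by (simp add: pmf_map vimage_def)
  have ne: "set_pmf p \<inter> ?A \<noteq> {}"
  proof
    assume "set_pmf p \<inter> ?A = {}"
    then have "u2 \<notin> set_pmf (map_pmf snd p)" by auto
    then show False using False by (simp add: set_pmf_eq)
  qed
  show ?thesis
  proof (cases "(u1, u2) \<in> set_pmf p")
    case True
    have inj: "inj_on fst (set_pmf (cond_pmf p ?A))" using ne by (auto simp: inj_on_def prod_eq_iff)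
    have "pmf (bpost p u2) u1 = pmf (cond_pmf p ?A) (u1, u2)"
      unfolding bpost_def using pmf_map_inj[OF inj, of "(u1,u2)"] True ne by simp
    also have "\<dots> = pmf p (u1, u2) / pmf (map_pmf snd p) u2"
      using ne by (simp add: pmf_cond mA)
    finally show ?thesis using False by simp
  next
    case nT: False
    have "u1 \<notin> set_pmf (bpost p u2)"
      unfolding bpost_def using ne nT by auto
    then show ?thesis using nT by (simp add: set_pmf_eq)
  qed
qed

lemma kform_bayes:
  assumes kf: "kform D k"
  shows "kform (map_pmf (\<lambda>(v, (u1, u2)). ((v, u2), u1)) D) (\<lambda>(v, u2). bpost (k v) u2)"
proof -
  have inj: "inj (\<lambda>(v, (u1, u2)). ((v, u2), u1))" by (auto simp: inj_on_def)
  have m: "map_pmf fst (map_pmf (\<lambda>(v, (u1, u2)). ((v, u2), u1)) D) = map_pmf (\<lambda>(v, u). (v, snd u)) D"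
    by (simp add: map_pmf_comp split_beta case_prod_beta')
  have kf2: "kform (map_pmf (\<lambda>(v, u). (v, snd u)) D) (\<lambda>v. map_pmf snd (k v))"
    by (rule kform_map_snd[OF kf])
  have m2: "map_pmf fst (map_pmf (\<lambda>(v, u). (v, snd u)) D) = map_pmf fst D"
    by (simp add: map_pmf_comp split_beta)
  have key: "pmf (map_pmf (\<lambda>(v, (u1, u2)). ((v, u2), u1)) D) ((v, u2), u1) =
        pmf (map_pmf fst (map_pmf (\<lambda>(v, (u1, u2)). ((v, u2), u1)) D)) (v, u2) * pmf (bpost (k v) u2) u1" for v u2 u1
  proof -
    have l: "pmf (map_pmf (\<lambda>(v, (u1, u2)). ((v, u2), u1)) D) ((v, u2), u1) = pmf D (v, (u1, u2))"
      using pmf_map_inj'[OF inj, of D "(v,(u1,u2))"] by simp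
    show ?thesis
      unfolding l m kform_pmf[OF kf2] m2 kform_pmf[OF kf]
      using bpost_pmf[of "k v" u2 u1] by (simp add: mult.assoc)
  qed
  show ?thesis
    apply (rule kformI_pmf)
    subgoal for vu u by (cases vu) (simp add: key)
    done
qed

lemma kform_bind:
  assumes "\<And>z. z \<in> set_pmf Z \<Longrightarrow> kform (F z) (\<lambda>v. k (z, v))"
  shows "kform (bind_pmf Z (\<lambda>z. map_pmf (\<lambda>(v, u). ((z, v), u)) (F z))) k"
proof -
  have F: "F z = bind_pmf (map_pmf fst (F z)) (\<lambda>v. map_pmf (Pair v) (k (z, v)))" if "z \<in> set_pmf Z" for z
    using assms[OF that] unfolding kform_def .
  have "bind_pmf Z (\<lambda>z. map_pmf (\<lambda>(v, u). ((z, v), u)) (F z))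
      = bind_pmf Z (\<lambda>z. map_pmf (\<lambda>(v, u). ((z, v), u)) (bind_pmf (map_pmf fst (F z)) (\<lambda>v. map_pmf (Pair v) (k (z, v)))))"
    using F by (intro bind_pmf_cong) auto
  also have "\<dots> = bind_pmf (map_pmf fst (bind_pmf Z (\<lambda>z. map_pmf (\<lambda>(v, u). ((z, v), u)) (F z)))) (\<lambda>v. map_pmf (Pair v) (k v))"
    by (simp add: map_bind_pmf map_pmf_comp bind_assoc_pmf bind_map_pmf split_beta)
  finally show ?thesis unfolding kform_def .
qed

lemma kform_ext:
  assumes "kform D k"
  shows "kform (bind_pmf D (\<lambda>(v, u). map_pmf (\<lambda>c. ((v, c), u)) (G v))) (\<lambda>(v, c). k v)"
proof -
  let ?L = "map_pmf fst D"
  have D: "D = bind_pmf ?L (\<lambda>v. map_pmf (Pair v) (k v))" using assms unfolding kform_def .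
  have lhs: "bind_pmf D (\<lambda>(v, u). map_pmf (\<lambda>c. ((v, c), u)) (G v))
     = bind_pmf ?L (\<lambda>v. bind_pmf (G v) (\<lambda>c. map_pmf (\<lambda>u. ((v, c), u)) (k v)))"
    apply (subst D)
    apply (simp add: bind_assoc_pmf bind_map_pmf map_pmf_def[where M="G _"] map_pmf_def[where M="k _"] bind_return_pmf)
    apply (subst bind_commute_pmf)
    apply simp
    done
  have fst_eq: "map_pmf fst (bind_pmf D (\<lambda>(v, u). map_pmf (\<lambda>c. ((v, c), u)) (G v)))
     = bind_pmf ?L (\<lambda>v. map_pmf (Pair v) (G v))"
    unfolding lhs by (simp add: map_bind_pmf map_pmf_comp bind_pmf_const map_pmf_def[symmetric])
  show ?thesis unfolding kform_def fst_eq
    by (simp add: lhs bind_assoc_pmf bind_map_pmf split_beta)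
qed


lemma kform_set:
  assumes "kform D k"
  shows "set_pmf D = Sigma (set_pmf (map_pmf fst D)) (\<lambda>v. set_pmf (k v))"
proof -
  have "set_pmf D = set_pmf (bind_pmf (map_pmf fst D) (\<lambda>v. map_pmf (Pair v) (k v)))"
    using assms unfolding kform_def by simp
  also have "\<dots> = Sigma (set_pmf (map_pmf fst D)) (\<lambda>v. set_pmf (k v))" by auto
  finally show ?thesis .
qed

lemma kform_fin:
  assumes kf: "kform D k" and fin: "finite (set_pmf D)" and v: "v \<in> set_pmf (map_pmf fst D)"
  shows "finite (set_pmf (k v))"
proof -
  have "Pair v ` set_pmf (k v) \<subseteq> set_pmf D" using kform_set[OF kf] v by auto
  then have "finite (Pair v ` set_pmf (k v))" using fin finite_subset by blast
  then show ?thesis by (rule finite_imageD) (auto simp: inj_on_def)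
qed

lemma kform_sum:
  assumes kf: "kform D k" and fin: "finite (set_pmf D)"
  shows "(\<Sum>x\<in>set_pmf D. pmf D x * f x)
       = (\<Sum>v\<in>set_pmf (map_pmf fst D). pmf (map_pmf fst D) v * (\<Sum>u\<in>set_pmf (k v). pmf (k v) u * f (v, u)))"
proof -
  let ?L = "map_pmf fst D"
  have finL: "finite (set_pmf ?L)" using fin by simp
  have "(\<Sum>x\<in>set_pmf D. pmf D x * f x) = (\<Sum>v\<in>set_pmf ?L. \<Sum>u\<in>set_pmf (k v). pmf D (v, u) * f (v, u))"
    unfolding kform_set[OF kf] using finL kform_fin[OF kf fin] by (subst sum.Sigma) auto
  also have "\<dots> = (\<Sum>v\<in>set_pmf ?L. pmf ?L v * (\<Sum>u\<in>set_pmf (k v). pmf (k v) u * f (v, u)))"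
    by (simp add: kform_pmf[OF kf] sum_distrib_left mult.assoc)
  finally show ?thesis .
qed

lemma kform_ent:
  assumes kf: "kform D k" and fin: "finite (set_pmf D)"
  shows "ent D = ent (map_pmf fst D) + (\<Sum>v\<in>set_pmf (map_pmf fst D). pmf (map_pmf fst D) v * ent (k v))"
proof -
  let ?L = "map_pmf fst D"
  have finL: "finite (set_pmf ?L)" using fin by simp
  have "(\<Sum>x\<in>set_pmf D. pmf D x * log 2 (pmf D x))
     = (\<Sum>v\<in>set_pmf ?L. pmf ?L v * (\<Sum>u\<in>set_pmf (k v). pmf (k v) u * log 2 (pmf D (v, u))))"
    by (rule kform_sum[OF kf fin])
  also have "\<dots> = (\<Sum>v\<in>set_pmf ?L. pmf ?L v * log 2 (pmf ?L v) + pmf ?L v * (\<Sum>u\<in>set_pmf (k v). pmf (k v) u * log 2 (pmf (k v) u)))"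
  proof (intro sum.cong refl)
    fix v assume v: "v \<in> set_pmf ?L"
    have Lpos: "pmf ?L v > 0" using v by (simp add: pmf_positive)
    have "(\<Sum>u\<in>set_pmf (k v). pmf (k v) u * log 2 (pmf D (v, u)))
       = (\<Sum>u\<in>set_pmf (k v). pmf (k v) u * log 2 (pmf ?L v) + pmf (k v) u * log 2 (pmf (k v) u))"
      using Lpos by (intro sum.cong refl) (simp add: kform_pmf[OF kf] log_mult pmf_positive distrib_left)
    also have "\<dots> = log 2 (pmf ?L v) + (\<Sum>u\<in>set_pmf (k v). pmf (k v) u * log 2 (pmf (k v) u))"
      using kform_fin[OF kf fin v] by (simp add: sum.distrib sum_distrib_right[symmetric] sum_pmf_eq_1)
    finally show "pmf ?L v * (\<Sum>u\<in>set_pmf (k v). pmf (k v) u * log 2 (pmf D (v, u))) =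
         pmf ?L v * log 2 (pmf ?L v) + pmf ?L v * (\<Sum>u\<in>set_pmf (k v). pmf (k v) u * log 2 (pmf (k v) u))"
      by (simp add: distrib_left)
  qed
  finally show ?thesis unfolding ent_def by (simp add: sum.distrib sum_negf)
qed

lemma expect_fin:
  assumes "finite (set_pmf M)"
  shows "measure_pmf.expectation M f = (\<Sum>x\<in>set_pmf M. pmf M x * f x)"
  using assms by (subst integral_measure_pmf_real[where A="set_pmf M"]) (auto simp: mult.commute)


definition kap :: "('a \<Rightarrow> ('s1 \<times> 's2) pmf) \<Rightarrow> ('s1 \<Rightarrow> 's2 \<Rightarrow> 'x \<Rightarrow> ('y1 \<times> 'y2) pmf) \<Rightarrow> 'a \<Rightarrow> 'x
   \<Rightarrow> (('s1 \<times> 's2) \<times> ('y1 \<times> 'y2)) pmf" where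
  "kap PS W a x = bind_pmf (PS a) (\<lambda>s. map_pmf (Pair s) (W (fst s) (snd s) x))"

definition mksym :: "'a \<Rightarrow> 'x \<Rightarrow> ('s1 \<times> 's2) \<times> ('y1 \<times> 'y2) \<Rightarrow> ('a,'x,'s1,'s2,'y1,'y2) sym" where
  "mksym a x u = Sym a x (fst (fst u)) (snd (fst u)) (fst (snd u)) (snd (snd u))"

definition zsof :: "('a,'x,'s1,'s2,'y1,'y2) sym list \<Rightarrow> ('y1 \<times> 'y2) list" where
  "zsof h = map (\<lambda>c. (sY1 c, sY2 c)) h"

definition stepc where
  "stepc PS W f g m t zs = (let a = f m zs t; x = g m a zs t in map_pmf (mksym a x) (kap PS W a x))"

lemma traj_step_eq: "traj_step PS W f g m t h = map_pmf (\<lambda>c. h @ [c]) (stepc PS W f g m t (zsof h))"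
  unfolding traj_step_def stepc_def kap_def zsof_def Let_def
  by (simp add: map_bind_pmf map_pmf_comp mksym_def map_pmf_def bind_assoc_pmf bind_return_pmf)

definition Qn where
  "Qn PS W f g K PT n = bind_pmf (pmf_of_set {..<K}) (\<lambda>m. bind_pmf PT (\<lambda>t. map_pmf (\<lambda>h. (m, t, h)) (traj PS W f g m t n)))"

lemma code_dist_Qn: "code_dist PS W n K PT f g = Qn PS W f g K PT n"
  unfolding code_dist_def Qn_def by (simp add: map_pmf_def)

lemma Qn_Suc: "Qn PS W f g K PT (Suc n) =
   bind_pmf (Qn PS W f g K PT n) (\<lambda>(m, t, h). map_pmf (\<lambda>c. (m, t, h @ [c])) (stepc PS W f g m t (zsof h)))"
  unfolding Qn_def by (simp add: traj_step_eq bind_assoc_pmf map_bind_pmf bind_map_pmf map_pmf_comp)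

lemma traj_len: "h \<in> set_pmf (traj PS W f g m t n) \<Longrightarrow> length h = n"
proof (induction n arbitrary: h)
  case 0
  then show ?case by simp
next
  case (Suc n)
  then show ?case by (auto simp: traj_step_eq)
qed

lemma Qn_set: "(m, t, h) \<in> set_pmf (Qn PS W f g K PT n) \<Longrightarrow> length h = n"
  unfolding Qn_def by (auto dest: traj_len)

lemma Qn_set_m: "K > 0 \<Longrightarrow> (m, t, h) \<in> set_pmf (Qn PS W f g K PT n) \<Longrightarrow> m < K"
  unfolding Qn_def by (auto simp: set_pmf_of_set lessThan_empty_iff)

lemma Qn_prefix:
  assumes "k \<le> n"
  shows "map_pmf (\<lambda>(m, t, h). (m, t, take k h)) (Qn PS W f g K PT n) = Qn PS W f g K PT k"
  using assms
proof (induction n)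
  case 0
  then show ?case using Qn_set[of _ _ _ PS W f g K PT 0]
    by (auto intro!: map_pmf_idI)
next
  case (Suc n)
  show ?case
  proof (cases "k = Suc n")
    case True
    then show ?thesis using Qn_set[of _ _ _ PS W f g K PT "Suc n"]
      by (auto intro!: map_pmf_idI)
  next
    case False
    then have kn: "k \<le> n" using Suc.prems by simp
    have "map_pmf (\<lambda>(m, t, h). (m, t, take k h)) (Qn PS W f g K PT (Suc n))
       = bind_pmf (Qn PS W f g K PT n) (\<lambda>(m, t, h). return_pmf (m, t, take k h))"
      unfolding Qn_Suc map_bind_pmf
    proof (intro bind_pmf_cong refl)
      fix w assume w: "w \<in> set_pmf (Qn PS W f g K PT n)"
      obtain m t h where mth: "w = (m, t, h)" by (cases w) auto
      have "length h = n" using w mth Qn_set by blast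
      then show "map_pmf (\<lambda>(m, t, h). (m, t, take k h)) ((\<lambda>(m, t, h). map_pmf (\<lambda>c. (m, t, h @ [c])) (stepc PS W f g m t (zsof h))) w)
          = (\<lambda>(m, t, h). return_pmf (m, t, take k h)) w"
        using kn by (simp add: mth map_pmf_comp map_pmf_const)
    qed
    also have "\<dots> = map_pmf (\<lambda>(m, t, h). (m, t, take k h)) (Qn PS W f g K PT n)"
      by (simp add: map_pmf_def split_beta case_prod_beta')
    also have "\<dots> = Qn PS W f g K PT k" using Suc.IH[OF kn] .
    finally show ?thesis .
  qed
qed


lemma kform_const: "k v0 = P \<Longrightarrow> kform (map_pmf (Pair v0) P) k"
  unfolding kform_def by (simp add: map_pmf_comp bind_return_pmf)

lemma stepc_eq: "stepc PS W f g m t zs = map_pmf (mksym (f m zs t) (g m (f m zs t) zs t)) (kap PS W (f m zs t) (g m (f m zs t) zs t))"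
  unfolding stepc_def Let_def ..

lemma mksym_sel[simp]:
  "sA (mksym a x u) = a" "sX (mksym a x u) = x" "sS1 (mksym a x u) = fst (fst u)" "sS2 (mksym a x u) = snd (fst u)"
  "sY1 (mksym a x u) = fst (snd u)" "sY2 (mksym a x u) = snd (snd u)"
  by (simp_all add: mksym_def)

definition RV where "RV i = (\<lambda>(m::nat, t::nat, h). ((m, t, take i h), (sA (h ! i), sX (h ! i))))"
definition RU where "RU i = (\<lambda>(m::nat, t::nat, h). ((sS1 (h ! i), sS2 (h ! i)), (sY1 (h ! i), sY2 (h ! i))))"

lemma kform_R:
  assumes "i < n"
  shows "kform (map_pmf (\<lambda>w. (RV i w, RU i w)) (Qn PS W f g K PT n)) (\<lambda>(z, (a, x)). kap PS W a x)"
proof -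
  have "map_pmf (\<lambda>w. (RV i w, RU i w)) (Qn PS W f g K PT n)
      = map_pmf (\<lambda>w. (RV i w, RU i w)) (map_pmf (\<lambda>(m, t, h). (m, t, take (Suc i) h)) (Qn PS W f g K PT n))"
    unfolding map_pmf_comp
    apply (intro map_pmf_cong refl)
    subgoal for w
      using assms by (cases w rule: prod_cases3) (auto simp: RV_def RU_def dest!: Qn_set)
    done
  also have "\<dots> = map_pmf (\<lambda>w. (RV i w, RU i w)) (Qn PS W f g K PT (Suc i))"
    using assms by (subst Qn_prefix) auto
  also have "\<dots> = bind_pmf (Qn PS W f g K PT i) (\<lambda>z. map_pmf (\<lambda>(v, u). ((z, v), u))
        (map_pmf (Pair (f (fst z) (zsof (snd (snd z))) (fst (snd z)),
                         g (fst z) (f (fst z) (zsof (snd (snd z))) (fst (snd z))) (zsof (snd (snd z))) (fst (snd z))))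
           (kap PS W (f (fst z) (zsof (snd (snd z))) (fst (snd z)))
              (g (fst z) (f (fst z) (zsof (snd (snd z))) (fst (snd z))) (zsof (snd (snd z))) (fst (snd z))))))"
    unfolding Qn_Suc map_bind_pmf
    apply (intro bind_pmf_cong refl)
    subgoal for w
      by (cases w rule: prod_cases3) (auto simp: stepc_eq map_pmf_comp RV_def RU_def dest!: Qn_set)
    done
  also have "kform \<dots> (\<lambda>(z, (a, x)). kap PS W a x)"
    by (intro kform_bind kform_const) simp
  finally show ?thesis .
qed

definition SV where "SV i = (\<lambda>(m::nat, t::nat, h). ((m, t, take i h), (sA (h ! i), sX (h ! i), sY1 (h ! i), sY2 (h ! i)), drop (Suc i) h))"
definition SU where "SU i = (\<lambda>(m::nat, t::nat, h). (sS1 (h ! i), sS2 (h ! i)))"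
definition kS where "kS PS W = (\<lambda>(z::nat \<times> nat \<times> ('a,'x,'s1,'s2,'y1,'y2) sym list, (a::'a, x::'x, y1::'y1, y2::'y2), r::('a,'x,'s1,'s2,'y1,'y2) sym list).
    bpost (kap PS W a x) (y1, y2))"

definition zsofV where "zsofV = (\<lambda>((m::nat, t::nat, p), (a::'a, x::'x, y1, y2), r). zsof p @ [(y1, y2)] @ zsof r)"

lemma zsof_split:
  assumes "i < length h"
  shows "zsof h = zsofV (SV i (m, t, h))"
proof -
  have "h = take i h @ [h ! i] @ drop (Suc i) h" using assms by (simp add: id_take_nth_drop)
  then have "zsof h = zsof (take i h @ [h ! i] @ drop (Suc i) h)" by simp
  also have "\<dots> = zsofV (SV i (m, t, h))" by (simp add: zsof_def zsofV_def SV_def)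
  finally show ?thesis .
qed

lemma kform_post_step:
  "kform (map_pmf (\<lambda>(v, u). ((case v of (_, y) \<Rightarrow> ((a, x, fst y, snd y), [])), u))
          (map_pmf (\<lambda>(v, (u1, u2)). ((v, u2), u1)) (map_pmf (Pair ()) (kap PS W a x))))
        (\<lambda>v. kS PS W (z, v))"
proof -
  have k0: "kform (map_pmf (Pair ()) (kap PS W a x)) (\<lambda>_. kap PS W a x)"
    by (rule kform_const) simp
  show ?thesis
    by (rule kform_marg[OF kform_bayes[OF k0]]) (auto simp: kS_def)
qed

lemma kform_S':
  assumes "Suc i \<le> n"
  shows "kform (map_pmf (\<lambda>w. (SV i w, SU i w)) (Qn PS W f g K PT n)) (kS PS W)"
  using assms
proof (induction n rule: dec_induct)
  case base
  have "map_pmf (\<lambda>w. (SV i w, SU i w)) (Qn PS W f g K PT (Suc i))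
     = bind_pmf (Qn PS W f g K PT i) (\<lambda>z. map_pmf (\<lambda>(v, u). ((z, v), u))
        (map_pmf (\<lambda>(v, u). ((case v of (_, y) \<Rightarrow> ((f (fst z) (zsof (snd (snd z))) (fst (snd z)),
                         g (fst z) (f (fst z) (zsof (snd (snd z))) (fst (snd z))) (zsof (snd (snd z))) (fst (snd z)), fst y, snd y), [])), u))
          (map_pmf (\<lambda>(v, (u1, u2)). ((v, u2), u1)) (map_pmf (Pair ())
           (kap PS W (f (fst z) (zsof (snd (snd z))) (fst (snd z)))
              (g (fst z) (f (fst z) (zsof (snd (snd z))) (fst (snd z))) (zsof (snd (snd z))) (fst (snd z))))))))"
    unfolding Qn_Suc map_bind_pmf
    apply (intro bind_pmf_cong refl)
    subgoal for w
      by (cases w rule: prod_cases3) (auto simp: stepc_eq map_pmf_comp SV_def SU_def split_beta dest!: Qn_set)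
    done
  also have "kform \<dots> (kS PS W)"
    by (intro kform_bind kform_post_step)
  finally show ?case .
next
  case (step n)
  have "map_pmf (\<lambda>w. (SV i w, SU i w)) (Qn PS W f g K PT (Suc n))
     = map_pmf (\<lambda>((v, c), u). (case v of (z, s, r) \<Rightarrow> (z, s, r @ [c]), u))
        (bind_pmf (map_pmf (\<lambda>w. (SV i w, SU i w)) (Qn PS W f g K PT n))
          (\<lambda>(v, u). map_pmf (\<lambda>c. ((v, c), u)) (case v of ((m, t, p), s, r) \<Rightarrow> stepc PS W f g m t (zsofV v))))"
    unfolding Qn_Suc map_bind_pmf bind_map_pmf
    apply (intro bind_pmf_cong refl)
    subgoal premises prems for w
    proof (cases w rule: prod_cases3)
      case (fields m t h)
      have len: "length h = n" using prems fields Qn_set by blast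
      then have zs: "zsof h = zsofV (SV i (m, t, h))" using step.hyps by (intro zsof_split) simp
      show ?thesis
        using len step.hyps zs by (simp add: fields map_pmf_comp SV_def SU_def nth_append)
    qed
    done
  also have "kform \<dots> (kS PS W)"
  proof -
    have eq: "(\<lambda>((v, c), u). (case v of (z, s, r) \<Rightarrow> (z, s, r @ [c]), u))
       = (\<lambda>(vc, u). ((\<lambda>(v, c). case v of (z, s, r) \<Rightarrow> (z, s, r @ [c])) vc, u))"
      by (auto simp: fun_eq_iff)
    show ?thesis unfolding eq
      by (rule kform_marg[OF kform_ext[OF step.IH]]) (auto simp: kS_def split: prod.splits)
  qed
  finally show ?case .
qed

lemma kform_S:
  "i < n \<Longrightarrow> kform (map_pmf (\<lambda>w. (SV i w, SU i w)) (Qn PS W f g K PT n)) (kS PS W)"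
  by (rule kform_S') simp


instance sym :: (finite, finite, finite, finite, finite, finite) finite
proof
  have "(UNIV :: ('a,'b,'c,'d,'e,'f) sym set) = (\<lambda>(a,b,c,d,e,f). Sym a b c d e f) ` UNIV"
    by (auto simp: image_iff) (metis sym.exhaust)
  then show "finite (UNIV :: ('a,'b,'c,'d,'e,'f) sym set)" by (metis finite finite_imageI)
qed

lemma ent_map_inj:
  assumes "inj f"
  shows "ent (map_pmf f p) = ent p"
proof -
  have "(\<Sum>v\<in>f ` set_pmf p. pmf (map_pmf f p) v * log 2 (pmf (map_pmf f p) v))
      = (\<Sum>v\<in>set_pmf p. pmf (map_pmf f p) (f v) * log 2 (pmf (map_pmf f p) (f v)))"
    using assms by (subst sum.reindex) (auto simp: inj_on_def)
  also have "\<dots> = (\<Sum>v\<in>set_pmf p. pmf p v * log 2 (pmf p v))"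
    using assms by (simp add: pmf_map_inj')
  finally show ?thesis unfolding ent_def by simp
qed

lemma kform_ent_exp:
  assumes kf: "kform D k" and fin: "finite (set_pmf D)"
  shows "ent D - ent (map_pmf fst D) = measure_pmf.expectation (map_pmf fst D) (\<lambda>v. ent (k v))"
proof -
  have "measure_pmf.expectation (map_pmf fst D) (\<lambda>v. ent (k v))
      = (\<Sum>v\<in>set_pmf (map_pmf fst D). pmf (map_pmf fst D) v * ent (k v))"
    by (rule expect_fin) (simp add: fin)
  then show ?thesis using kform_ent[OF kf fin] by simp
qed

lemma joint1_eq: "joint1 PS W P = bind_pmf P (\<lambda>ax. map_pmf (mksym (fst ax) (snd ax)) (kap PS W (fst ax) (snd ax)))"
  unfolding joint1_def kap_def
  by (simp add: map_bind_pmf map_pmf_comp mksym_def map_pmf_def bind_assoc_pmf bind_return_pmf)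

lemma sym_recon: "c = mksym (sA c) (sX c) ((sS1 c, sS2 c), (sY1 c, sY2 c))"
  by (cases c) (simp add: mksym_def)

lemma J_fst: "map_pmf (\<lambda>c. (sA c, sX c)) (joint1 PS W P) = P"
  unfolding joint1_eq by (simp add: map_bind_pmf map_pmf_comp bind_pmf_const map_pmf_def[symmetric])

lemma J_kf: "kform (map_pmf (\<lambda>c. ((sA c, sX c), ((sS1 c, sS2 c), (sY1 c, sY2 c)))) (joint1 PS W P)) (\<lambda>(a, x). kap PS W a x)"
proof -
  have m: "map_pmf fst (map_pmf (\<lambda>c. ((sA c, sX c), ((sS1 c, sS2 c), (sY1 c, sY2 c)))) (joint1 PS W P)) = P"
    using J_fst[of PS W P] by (simp add: map_pmf_comp)
  show ?thesis unfolding kform_def m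
    unfolding joint1_eq by (simp add: map_bind_pmf map_pmf_comp split_beta)
qed


definition psi1 where "psi1 PS W a x y1 y2 s2 = ent (bpost (bpost (kap PS W a x) (y1, y2)) s2)"
definition psi2 where "psi2 PS W a x = ent (map_pmf (\<lambda>(s, y). (fst y, fst s)) (kap PS W a x))"

definition rhoK :: "('s::finite) pmf \<Rightarrow> ('s \<Rightarrow> 'e::finite \<Rightarrow> real) \<Rightarrow> real" where
  "rhoK k d = Min (range (\<lambda>t. \<Sum>s\<in>UNIV. pmf k s * d s t))"

lemma rhoK_le: "rhoK k d \<le> (\<Sum>s\<in>UNIV. pmf k s * d s t)"
  unfolding rhoK_def by (rule Min_le) auto

lemma sum_set_univ:
  fixes k :: "'s::finite pmf"
  shows "(\<Sum>s\<in>set_pmf k. pmf k s * F s) = (\<Sum>s\<in>UNIV. pmf k s * F s)"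
  by (intro sum.mono_neutral_left) (auto simp: set_pmf_eq)

lemma dist_lower_gen:
  fixes q :: "('v \<times> 's::finite) pmf"
  assumes kf: "kform q k" and fin: "finite (set_pmf q)"
  shows "measure_pmf.expectation (map_pmf fst q) (\<lambda>v. rhoK (k v) d) \<le> measure_pmf.expectation q (\<lambda>(v, s). d s (e v))"
proof -
  have finL: "finite (set_pmf (map_pmf fst q))" using fin by simp
  have "measure_pmf.expectation q (\<lambda>(v, s). d s (e v)) = (\<Sum>x\<in>set_pmf q. pmf q x * (\<lambda>(v, s). d s (e v)) x)"
    by (rule expect_fin[OF fin])
  also have "\<dots> = (\<Sum>v\<in>set_pmf (map_pmf fst q). pmf (map_pmf fst q) v * (\<Sum>s\<in>set_pmf (k v). pmf (k v) s * d s (e v)))"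
    by (subst kform_sum[OF kf fin]) simp
  also have "\<dots> \<ge> (\<Sum>v\<in>set_pmf (map_pmf fst q). pmf (map_pmf fst q) v * rhoK (k v) d)"
    by (intro sum_mono mult_left_mono) (simp_all add: sum_set_univ rhoK_le)
  also have "(\<Sum>v\<in>set_pmf (map_pmf fst q). pmf (map_pmf fst q) v * rhoK (k v) d) = measure_pmf.expectation (map_pmf fst q) (\<lambda>v. rhoK (k v) d)"
    by (rule expect_fin[OF finL, symmetric])
  finally show ?thesis .
qed

lemma bayes_val_gen:
  fixes q :: "('v \<times> 's::finite) pmf" and e :: "'v \<Rightarrow> 'e::finite"
  assumes kf: "kform q k" and fin: "finite (set_pmf q)" and b: "bayes_est q d e"
  shows "measure_pmf.expectation q (\<lambda>(v, s). d s (e v)) = measure_pmf.expectation (map_pmf fst q) (\<lambda>v. rhoK (k v) d)"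
proof -
  have finL: "finite (set_pmf (map_pmf fst q))" using fin by simp
  have pt: "(\<Sum>s\<in>set_pmf (k v). pmf (k v) s * d s (e v)) = rhoK (k v) d" if v: "v \<in> set_pmf (map_pmf fst q)" for v
  proof -
    have Lpos: "pmf (map_pmf fst q) v > 0" using v by (simp add: pmf_positive)
    have cp: "cpmf q v s = pmf (k v) s" for s
      unfolding cpmf_def kform_pmf[OF kf] using Lpos by simp
    have opt: "(\<Sum>s\<in>UNIV. pmf (k v) s * d s (e v)) \<le> (\<Sum>s\<in>UNIV. pmf (k v) s * d s t)" for t
      using b[unfolded bayes_est_def, rule_format, of v t] unfolding cp by simp
    have "rhoK (k v) d = (\<Sum>s\<in>UNIV. pmf (k v) s * d s (e v))"
      unfolding rhoK_def by (rule Min_eqI) (auto intro: opt)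
    then show ?thesis by (simp add: sum_set_univ)
  qed
  have "measure_pmf.expectation q (\<lambda>(v, s). d s (e v)) = (\<Sum>x\<in>set_pmf q. pmf q x * (\<lambda>(v, s). d s (e v)) x)"
    by (rule expect_fin[OF fin])
  also have "\<dots> = (\<Sum>v\<in>set_pmf (map_pmf fst q). pmf (map_pmf fst q) v * (\<Sum>s\<in>set_pmf (k v). pmf (k v) s * d s (e v)))"
    by (subst kform_sum[OF kf fin]) simp
  also have "\<dots> = (\<Sum>v\<in>set_pmf (map_pmf fst q). pmf (map_pmf fst q) v * rhoK (k v) d)"
    using pt by simp
  also have "\<dots> = measure_pmf.expectation (map_pmf fst q) (\<lambda>v. rhoK (k v) d)"
    by (rule expect_fin[OF finL, symmetric])
  finally show ?thesis .
qed

context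
  fixes PS :: "'a::finite \<Rightarrow> ('s1::finite \<times> 's2::finite) pmf"
    and W :: "'s1 \<Rightarrow> 's2 \<Rightarrow> 'x::finite \<Rightarrow> ('y1::finite \<times> 'y2::finite) pmf"
begin

lemma kf_J1:
  "kform (map_pmf (\<lambda>c. (((sA c, sX c), (sY1 c, sY2 c)), (sS1 c, sS2 c))) (joint1 PS W P))
     (\<lambda>(v, y). bpost (kap PS W (fst v) (snd v)) y)"
  using kform_bayes[OF J_kf[of PS W P]]
  by (simp add: map_pmf_comp split_beta case_prod_beta')

lemma kf_J2:
  "kform (map_pmf (\<lambda>c. ((sY1 c, sY2 c, sS2 c, sX c, sA c), sS1 c)) (joint1 PS W P))
     (\<lambda>(y1, y2, s2, x, a). bpost (bpost (kap PS W a x) (y1, y2)) s2)"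
proof -
  note k2 = kform_bayes[OF kf_J1[of P]]
  have "kform (map_pmf (\<lambda>(v, u). ((\<lambda>((ax, y), s2). (fst y, snd y, s2, snd ax, fst ax)) v, u))
     (map_pmf (\<lambda>(v, u1, u2). ((v, u2), u1)) (map_pmf (\<lambda>c. (((sA c, sX c), sY1 c, sY2 c), sS1 c, sS2 c)) (joint1 PS W P))))
     (\<lambda>(y1, y2, s2, x, a). bpost (bpost (kap PS W a x) (y1, y2)) s2)"
    by (rule kform_marg[OF k2]) (auto simp: split_beta)
  then show ?thesis by (simp add: map_pmf_comp split_beta case_prod_beta')
qed

lemma cent_S1:
  "cent (map_pmf (\<lambda>c. (sS1 c, (sY1 c, sY2 c, sS2 c, sX c, sA c))) (joint1 PS W P))
   = measure_pmf.expectation (joint1 PS W P) (\<lambda>c. psi1 PS W (sA c) (sX c) (sY1 c) (sY2 c) (sS2 c))"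
proof -
  let ?D = "map_pmf (\<lambda>c. ((sY1 c, sY2 c, sS2 c, sX c, sA c), sS1 c)) (joint1 PS W P)"
  have sw: "map_pmf (\<lambda>c. (sS1 c, (sY1 c, sY2 c, sS2 c, sX c, sA c))) (joint1 PS W P) = map_pmf (\<lambda>(a, b). (b, a)) ?D"
    by (simp add: map_pmf_comp)
  have "cent (map_pmf (\<lambda>c. (sS1 c, (sY1 c, sY2 c, sS2 c, sX c, sA c))) (joint1 PS W P)) = ent ?D - ent (map_pmf fst ?D)"
  proof -
    have inj: "inj (\<lambda>(a :: _ \<times> _ \<times> _ \<times> _ \<times> _, b :: _). (b, a))" by (auto simp: inj_on_def)
    have e1: "ent (map_pmf (\<lambda>c. (sS1 c, (sY1 c, sY2 c, sS2 c, sX c, sA c))) (joint1 PS W P)) = ent ?D"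
      unfolding sw by (rule ent_map_inj[OF inj])
    show ?thesis unfolding cent_def e1 by (simp add: map_pmf_comp)
  qed
  also have "\<dots> = measure_pmf.expectation (map_pmf fst ?D) (\<lambda>v. ent ((\<lambda>(y1, y2, s2, x, a). bpost (bpost (kap PS W a x) (y1, y2)) s2) v))"
    by (rule kform_ent_exp[OF kf_J2]) simp
  also have "\<dots> = measure_pmf.expectation (joint1 PS W P) (\<lambda>c. psi1 PS W (sA c) (sX c) (sY1 c) (sY2 c) (sS2 c))"
    by (simp add: map_pmf_comp psi1_def)
  finally show ?thesis .
qed

lemma minf_F2:
  "minf (map_pmf (\<lambda>c. ((sX c, sA c), (sY1 c, sS1 c))) (joint1 PS W P))
   = ent (map_pmf (\<lambda>c. (sY1 c, sS1 c)) (joint1 PS W P)) - measure_pmf.expectation (joint1 PS W P) (\<lambda>c. psi2 PS W (sA c) (sX c))"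
proof -
  let ?D = "map_pmf (\<lambda>c. ((sX c, sA c), (sY1 c, sS1 c))) (joint1 PS W P)"
  have "kform (map_pmf (\<lambda>(v, u). ((\<lambda>(a, x). (x, a)) v, u))
      (map_pmf (\<lambda>(v, u). (v, (\<lambda>(s, y). (fst y, fst s)) u)) (map_pmf (\<lambda>c. ((sA c, sX c), ((sS1 c, sS2 c), (sY1 c, sY2 c)))) (joint1 PS W P))))
      (\<lambda>(x, a). map_pmf (\<lambda>(s, y). (fst y, fst s)) (kap PS W a x))"
    by (rule kform_marg[OF kform_map_snd[OF J_kf]]) auto
  then have kf: "kform ?D (\<lambda>(x, a). map_pmf (\<lambda>(s, y). (fst y, fst s)) (kap PS W a x))"
    by (simp add: map_pmf_comp split_beta)
  have "ent ?D - ent (map_pmf fst ?D) = measure_pmf.expectation (map_pmf fst ?D) (\<lambda>v. ent ((\<lambda>(x, a). map_pmf (\<lambda>(s, y). (fst y, fst s)) (kap PS W a x)) v))"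
    by (rule kform_ent_exp[OF kf]) simp
  also have "\<dots> = measure_pmf.expectation (joint1 PS W P) (\<lambda>c. psi2 PS W (sA c) (sX c))"
    by (simp add: map_pmf_comp psi2_def)
  finally show ?thesis unfolding minf_def by (simp add: map_pmf_comp)
qed

lemma kf_Jd1:
  "kform (map_pmf (\<lambda>c. ((sA c, sX c, sY1 c, sY2 c), sS1 c)) (joint1 PS W P))
     (\<lambda>(a, x, y1, y2). map_pmf fst (bpost (kap PS W a x) (y1, y2)))"
proof -
  have "kform (map_pmf (\<lambda>(v, u). ((\<lambda>(ax, y). (fst ax, snd ax, fst y, snd y)) v, u))
      (map_pmf (\<lambda>(v, u). (v, fst u)) (map_pmf (\<lambda>c. (((sA c, sX c), (sY1 c, sY2 c)), (sS1 c, sS2 c))) (joint1 PS W P))))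
     (\<lambda>(a, x, y1, y2). map_pmf fst (bpost (kap PS W a x) (y1, y2)))"
    by (rule kform_marg[OF kform_map_snd[OF kf_J1]]) auto
  then show ?thesis by (simp add: map_pmf_comp split_beta)
qed

lemma kf_Jd2:
  "kform (map_pmf (\<lambda>c. ((sA c, sX c, sY1 c, sY2 c), sS2 c)) (joint1 PS W P))
     (\<lambda>(a, x, y1, y2). map_pmf snd (bpost (kap PS W a x) (y1, y2)))"
proof -
  have "kform (map_pmf (\<lambda>(v, u). ((\<lambda>(ax, y). (fst ax, snd ax, fst y, snd y)) v, u))
      (map_pmf (\<lambda>(v, u). (v, snd u)) (map_pmf (\<lambda>c. (((sA c, sX c), (sY1 c, sY2 c)), (sS1 c, sS2 c))) (joint1 PS W P))))
     (\<lambda>(a, x, y1, y2). map_pmf snd (bpost (kap PS W a x) (y1, y2)))"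
    by (rule kform_marg[OF kform_map_snd[OF kf_J1]]) auto
  then show ?thesis by (simp add: map_pmf_comp split_beta)
qed

end


lemma tele_step:
  assumes fin: "finite (set_pmf Q)" and len: "\<And>w. w \<in> set_pmf Q \<Longrightarrow> k < length (H w)"
  shows "ent (map_pmf (\<lambda>w. (take (Suc k) (map F (H w)), B w)) Q)
       = ent (map_pmf (\<lambda>w. (F (H w ! k), (take k (map F (H w)), B w))) Q)"
  by (rule ent_map_eq[OF fin, where \<phi>="\<lambda>(x, p, b). (p @ [x], b)" and \<psi>="\<lambda>(p', b). (last p', butlast p', b)"])
     (auto simp: len take_Suc_conv_app_nth)

lemma tele_base:
  assumes fin: "finite (set_pmf Q)"
  shows "ent (map_pmf (\<lambda>w. (take 0 (map F (H w)), B w)) Q) = ent (map_pmf B Q)"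
  by (rule ent_map_eq[OF fin, where \<phi>="\<lambda>b. ([], b)" and \<psi>=snd]) auto

lemma tele_top:
  assumes fin: "finite (set_pmf Q)" and len: "\<And>w. w \<in> set_pmf Q \<Longrightarrow> length (H w) = n"
  shows "ent (map_pmf (\<lambda>w. (take n (map F (H w)), B w)) Q) = ent (map_pmf (\<lambda>w. (map F (H w), B w)) Q)"
  by (rule ent_map_eq[OF fin, where \<phi>="\<lambda>x. x" and \<psi>="\<lambda>x. x"]) (auto simp: len)

lemma telescope:
  assumes fin: "finite (set_pmf Q)" and len: "\<And>w. w \<in> set_pmf Q \<Longrightarrow> length (H w) = n"
  shows "ent (map_pmf (\<lambda>w. (map F (H w), B w)) Q) - ent (map_pmf B Q)
     = (\<Sum>k<n. ent (map_pmf (\<lambda>w. (F (H w ! k), (take k (map F (H w)), B w))) Q)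
              - ent (map_pmf (\<lambda>w. (take k (map F (H w)), B w)) Q))"
proof -
  let ?e = "\<lambda>k. ent (map_pmf (\<lambda>w. (take k (map F (H w)), B w)) Q)"
  have tel: "(\<Sum>k<n. ?e (Suc k) - ?e k) = ?e n - ?e 0" by (rule sum_lessThan_telescope)
  have st: "?e (Suc k) = ent (map_pmf (\<lambda>w. (F (H w ! k), (take k (map F (H w)), B w))) Q)" if "k < n" for k
    using that len by (intro tele_step[OF fin]) auto
  have "(\<Sum>k<n. ent (map_pmf (\<lambda>w. (F (H w ! k), (take k (map F (H w)), B w))) Q) - ?e k)
      = (\<Sum>k<n. ?e (Suc k) - ?e k)"
    using st by (intro sum.cong) auto
  also have "\<dots> = ?e n - ?e 0" by (rule tel)
  also have "?e n = ent (map_pmf (\<lambda>w. (map F (H w), B w)) Q)"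
    by (rule tele_top[where H=H and F=F and B=B, OF fin len])
  also have "?e 0 = ent (map_pmf B Q)" by (rule tele_base[OF fin])
  finally show ?thesis by simp
qed


context
  fixes PS :: "'a::finite \<Rightarrow> ('s1::finite \<times> 's2::finite) pmf"
    and W :: "'s1 \<Rightarrow> 's2 \<Rightarrow> 'x::finite \<Rightarrow> ('y1::finite \<times> 'y2::finite) pmf"
    and f :: "nat \<Rightarrow> ('y1 \<times> 'y2) list \<Rightarrow> nat \<Rightarrow> 'a"
    and g :: "nat \<Rightarrow> 'a \<Rightarrow> ('y1 \<times> 'y2) list \<Rightarrow> nat \<Rightarrow> 'x"
    and K :: nat and PT :: "nat pmf" and n :: nat
begin

definition Q1 where "Q1 = map_pmf (\<lambda>(m, t, h). (m, h)) (Qn PS W f g K PT n)"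
definition Pl where "Pl i = map_pmf (\<lambda>(m, t, h). (sA (h ! i), sX (h ! i))) (Qn PS W f g K PT n)"

lemma Q1_len: "w \<in> set_pmf Q1 \<Longrightarrow> length (snd w) = n"
  unfolding Q1_def by (auto dest: Qn_set)

lemma Q1_m: "K > 0 \<Longrightarrow> w \<in> set_pmf Q1 \<Longrightarrow> fst w < K"
  unfolding Q1_def by (auto dest: Qn_set_m)

lemma Q1_fin: "K > 0 \<Longrightarrow> finite (set_pmf Q1)"
proof -
  assume K: "K > 0"
  have "set_pmf Q1 \<subseteq> {..<K} \<times> {h. length h = n}" using Q1_len Q1_m[OF K] by fastforce
  moreover have "finite ({..<K} \<times> {h :: ('a,'x,'s1,'s2,'y1,'y2) sym list. length h = n})"
    using finite_lists_length_eq[of "UNIV :: ('a,'x,'s1,'s2,'y1,'y2) sym set" n]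
    by (intro finite_cartesian_product) auto
  ultimately show ?thesis using finite_subset by blast
qed

lemma letter:
  assumes "i < n"
  shows "map_pmf (\<lambda>w. snd w ! i) Q1 = joint1 PS W (Pl i)"
proof -
  note kf = kform_R[OF assms, of PS W f g K PT]
  let ?D = "map_pmf (\<lambda>w. (RV i w, RU i w)) (Qn PS W f g K PT n)"
  have D: "?D = bind_pmf (map_pmf fst ?D) (\<lambda>v. map_pmf (Pair v) ((\<lambda>(z, (a, x)). kap PS W a x) v))"
    using kf unfolding kform_def .
  have "map_pmf (\<lambda>w. snd w ! i) Q1 = map_pmf (\<lambda>(v, u). mksym (fst (snd v)) (snd (snd v)) u) ?D"
    unfolding Q1_def map_pmf_comp
    by (intro map_pmf_cong refl) (auto simp: RV_def RU_def split_beta intro: sym_recon)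
  also have "\<dots> = bind_pmf (map_pmf fst ?D) (\<lambda>v. map_pmf (mksym (fst (snd v)) (snd (snd v))) (kap PS W (fst (snd v)) (snd (snd v))))"
    by (subst D) (simp add: map_bind_pmf map_pmf_comp split_beta)
  also have "\<dots> = joint1 PS W (Pl i)"
    unfolding joint1_eq Pl_def by (simp add: map_pmf_comp bind_map_pmf RV_def split_beta)
  finally show ?thesis .
qed

lemma kQ_R:
  assumes "i < n"
  shows "kform (map_pmf (\<lambda>w. (((fst w, take i (snd w)), (sA (snd w ! i), sX (snd w ! i))),
      ((sS1 (snd w ! i), sS2 (snd w ! i)), (sY1 (snd w ! i), sY2 (snd w ! i))))) Q1) (\<lambda>(z, (a, x)). kap PS W a x)"
proof -
  have "kform (map_pmf (\<lambda>(v, u). ((\<lambda>((m, t, p), ax). ((m, p), ax)) v, u)) (map_pmf (\<lambda>w. (RV i w, RU i w)) (Qn PS W f g K PT n)))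
      (\<lambda>(z, (a, x)). kap PS W a x)"
    by (rule kform_marg[OF kform_R[OF assms]]) auto
  then show ?thesis unfolding Q1_def by (simp add: map_pmf_comp RV_def RU_def split_beta)
qed

lemma kQ_S:
  assumes "i < n"
  shows "kform (map_pmf (\<lambda>w. ((((fst w, take i (snd w)), (sA (snd w ! i), sX (snd w ! i), sY1 (snd w ! i), sY2 (snd w ! i)),
       drop (Suc i) (snd w)), sS2 (snd w ! i)), sS1 (snd w ! i))) Q1)
     (\<lambda>(v, s2). case v of (z, (a, x, y1, y2), r) \<Rightarrow> bpost (bpost (kap PS W a x) (y1, y2)) s2)"
proof -
  have "kform (map_pmf (\<lambda>(v, u). ((\<lambda>(((m, t, p), st, r), s2). (((m, p), st, r), s2)) v, u))
      (map_pmf (\<lambda>(v, (u1, u2)). ((v, u2), u1)) (map_pmf (\<lambda>w. (SV i w, SU i w)) (Qn PS W f g K PT n))))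
     (\<lambda>(v, s2). case v of (z, (a, x, y1, y2), r) \<Rightarrow> bpost (bpost (kap PS W a x) (y1, y2)) s2)"
    by (rule kform_marg[OF kform_bayes[OF kform_S[OF assms]]]) (auto simp: kS_def split: prod.splits)
  then show ?thesis unfolding Q1_def by (simp add: map_pmf_comp SV_def SU_def split_beta)
qed

lemma kQ_D:
  assumes "i < n"
  shows "kform (map_pmf (\<lambda>w. ((map sX (snd w), map sA (snd w), map sY1 (snd w), map sY2 (snd w)), G (sS1 (snd w ! i), sS2 (snd w ! i)))) Q1)
     (\<lambda>(xs, as, y1s, y2s). map_pmf G (bpost (kap PS W (as ! i) (xs ! i)) (y1s ! i, y2s ! i)))"
proof -
  let ?\<psi> = "\<lambda>((m::nat, t::nat, p), (a, x, y1, y2), r). (map sX p @ [x] @ map sX r, map sA p @ [a] @ map sA r,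
       map sY1 p @ [y1] @ map sY1 r, map sY2 p @ [y2] @ map sY2 r)"
  have "kform (map_pmf (\<lambda>(v, u). (?\<psi> v, u)) (map_pmf (\<lambda>(v, u). (v, G u)) (map_pmf (\<lambda>w. (SV i w, SU i w)) (Qn PS W f g K PT n))))
     (\<lambda>(xs, as, y1s, y2s). map_pmf G (bpost (kap PS W (as ! i) (xs ! i)) (y1s ! i, y2s ! i)))"
  proof (rule kform_marg[OF kform_map_snd[OF kform_S[OF assms]]])
    fix v assume "v \<in> set_pmf (map_pmf fst (map_pmf (\<lambda>(v, u). (v, G u)) (map_pmf (\<lambda>w. (SV i w, SU i w)) (Qn PS W f g K PT n))))"
    then obtain m t h where v: "v = SV i (m, t, h)" and mth: "(m, t, h) \<in> set_pmf (Qn PS W f g K PT n)"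
      by (auto simp: map_pmf_comp)
    have "length h = n" using mth Qn_set by blast
    then show "map_pmf G (kS PS W v) = (\<lambda>(xs, as, y1s, y2s). map_pmf G (bpost (kap PS W (as ! i) (xs ! i)) (y1s ! i, y2s ! i))) (?\<psi> v)"
      using assms by (simp add: v SV_def kS_def nth_append min_def)
  qed
  moreover have "map_pmf (\<lambda>(v, u). (?\<psi> v, u)) (map_pmf (\<lambda>(v, u). (v, G u)) (map_pmf (\<lambda>w. (SV i w, SU i w)) (Qn PS W f g K PT n)))
     = map_pmf (\<lambda>w. ((map sX (snd w), map sA (snd w), map sY1 (snd w), map sY2 (snd w)), G (sS1 (snd w ! i), sS2 (snd w ! i)))) Q1"
    unfolding Q1_def map_pmf_comp
    apply (intro map_pmf_cong refl)
    subgoal premises prems for w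
    proof (cases w rule: prod_cases3)
      case (fields m t h)
      have "length h = n" using prems fields Qn_set by blast
      then have h: "h = take i h @ [h ! i] @ drop (Suc i) h" using assms by (simp add: id_take_nth_drop)
      have e: "map F h = map F (take i h) @ [F (h ! i)] @ map F (drop (Suc i) h)" for F :: "_ \<Rightarrow> 'zz"
        by (subst h) simp
      show ?thesis
        by (simp add: fields SV_def SU_def e[of sX] e[of sA] e[of sY1] e[of sY2])
    qed
    done
  ultimately show ?thesis by simp
qed

end


definition G1 where "G1 PS W J = ent (map_pmf (\<lambda>c. ((sY1 c, sS1 c), (sY2 c, sS2 c))) J) - ent (map_pmf (\<lambda>c. (sY2 c, sS2 c)) J)
   - measure_pmf.expectation J (\<lambda>c. psi1 PS W (sA c) (sX c) (sY1 c) (sY2 c) (sS2 c))"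
definition G2 where "G2 PS W J = ent (map_pmf (\<lambda>c. (sY1 c, sS1 c)) J) - measure_pmf.expectation J (\<lambda>c. psi2 PS W (sA c) (sX c))"

lemma ent_const: "ent (map_pmf (\<lambda>w. c) Q) = 0"
  by (simp add: ent_def map_pmf_const)

lemma ent_return[simp]: "ent (return_pmf x) = 0"
  by (simp add: ent_def)

context
  fixes PS :: "'a::finite \<Rightarrow> ('s1::finite \<times> 's2::finite) pmf"
    and W :: "'s1 \<Rightarrow> 's2 \<Rightarrow> 'x::finite \<Rightarrow> ('y1::finite \<times> 'y2::finite) pmf"
    and f :: "nat \<Rightarrow> ('y1 \<times> 'y2) list \<Rightarrow> nat \<Rightarrow> 'a"
    and g :: "nat \<Rightarrow> 'a \<Rightarrow> ('y1 \<times> 'y2) list \<Rightarrow> nat \<Rightarrow> 'x"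
    and K :: nat and PT :: "nat pmf" and n :: nat
  assumes K: "K > 0"
begin

abbreviation "QQ \<equiv> Q1 PS W f g K PT n"

lemma fin: "finite (set_pmf QQ)" by (rule Q1_fin[OF K])
lemma len: "w \<in> set_pmf QQ \<Longrightarrow> length (snd w) = n" by (rule Q1_len)

lemma letter_exp:
  fixes F :: "_ \<Rightarrow> real"
  assumes "k < n"
  shows "measure_pmf.expectation QQ (\<lambda>w. F (snd w ! k)) = measure_pmf.expectation (joint1 PS W (Pl PS W f g K PT n k)) F"
  unfolding letter[OF assms, of PS W f g K PT, symmetric] by simp

lemma letter_ent:
  assumes "k < n"
  shows "ent (map_pmf (\<lambda>w. F (snd w ! k)) QQ) = ent (map_pmf F (joint1 PS W (Pl PS W f g K PT n k)))"
  unfolding letter[OF assms, of PS W f g K PT, symmetric] by (simp add: map_pmf_comp)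

lemma X3_term:
  assumes k: "k < n"
  shows "ent (map_pmf (\<lambda>w. (sS1 (snd w ! k), (take k (map sS1 (snd w)), (fst w, map (\<lambda>c. (sY1 c, sY2 c, sS2 c)) (snd w))))) QQ)
       - ent (map_pmf (\<lambda>w. (take k (map sS1 (snd w)), (fst w, map (\<lambda>c. (sY1 c, sY2 c, sS2 c)) (snd w)))) QQ)
     \<ge> measure_pmf.expectation (joint1 PS W (Pl PS W f g K PT n k)) (\<lambda>c. psi1 PS W (sA c) (sX c) (sY1 c) (sY2 c) (sS2 c))"
proof -
  define V where "V w = (((fst w, take k (snd w)), (sA (snd w ! k), sX (snd w ! k), sY1 (snd w ! k), sY2 (snd w ! k)),
       drop (Suc k) (snd w)), sS2 (snd w ! k))" for w :: "nat \<times> ('a,'x,'s1,'s2,'y1,'y2) sym list"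
  define U where "U w = sS1 (snd w ! k)" for w :: "nat \<times> ('a,'x,'s1,'s2,'y1,'y2) sym list"
  let ?yy = "\<lambda>c. (sY1 c, sY2 c, sS2 c)"
  define \<psi> where "\<psi> = (\<lambda>(((m::nat, p::('a,'x,'s1,'s2,'y1,'y2) sym list), (a::'a, x::'x, y1::'y1, y2::'y2), r::('a,'x,'s1,'s2,'y1,'y2) sym list), s2::'s2). (map sS1 p, (m, map ?yy p @ [(y1, y2, s2)] @ map ?yy r)))"
  have det: "(take k (map sS1 (snd w)), (fst w, map ?yy (snd w))) = \<psi> (V w)" if "w \<in> set_pmf QQ" for w
  proof -
    have "length (snd w) = n" using len[OF that] .
    then have h: "snd w = take k (snd w) @ [snd w ! k] @ drop (Suc k) (snd w)" using k by (simp add: id_take_nth_drop)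
    have "map ?yy (snd w) = map ?yy (take k (snd w)) @ [?yy (snd w ! k)] @ map ?yy (drop (Suc k) (snd w))"
      by (subst h) simp
    then show ?thesis by (simp add: \<psi>_def V_def take_map)
  qed
  have cm: "ent (map_pmf (\<lambda>w. (U w, V w)) QQ) - ent (map_pmf V QQ)
      \<le> ent (map_pmf (\<lambda>w. (U w, (take k (map sS1 (snd w)), (fst w, map ?yy (snd w))))) QQ)
       - ent (map_pmf (\<lambda>w. (take k (map sS1 (snd w)), (fst w, map ?yy (snd w)))) QQ)"
    by (rule cond_mono[OF fin]) (rule det)
  have kf: "kform (map_pmf (\<lambda>w. (V w, U w)) QQ)
     (\<lambda>(v, s2). case v of (z, (a, x, y1, y2), r) \<Rightarrow> bpost (bpost (kap PS W a x) (y1, y2)) s2)"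
    unfolding V_def U_def by (rule kQ_S[OF k])
  have inj: "inj (\<lambda>(a :: _ \<times> _, b :: _). (b, a))" by (auto simp: inj_on_def)
  have sw: "ent (map_pmf (\<lambda>w. (U w, V w)) QQ) = ent (map_pmf (\<lambda>w. (V w, U w)) QQ)"
  proof -
    have "map_pmf (\<lambda>w. (U w, V w)) QQ = map_pmf (\<lambda>(a, b). (b, a)) (map_pmf (\<lambda>w. (V w, U w)) QQ)"
      by (simp add: map_pmf_comp)
    then show ?thesis using ent_map_inj[OF inj] by simp
  qed
  have "ent (map_pmf (\<lambda>w. (V w, U w)) QQ) - ent (map_pmf fst (map_pmf (\<lambda>w. (V w, U w)) QQ))
     = measure_pmf.expectation (map_pmf fst (map_pmf (\<lambda>w. (V w, U w)) QQ))
        (\<lambda>v. ent ((\<lambda>(v, s2). case v of (z, (a, x, y1, y2), r) \<Rightarrow> bpost (bpost (kap PS W a x) (y1, y2)) s2) v))"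
    by (rule kform_ent_exp[OF kf]) (simp add: fin)
  also have "\<dots> = measure_pmf.expectation QQ (\<lambda>w. psi1 PS W (sA (snd w ! k)) (sX (snd w ! k)) (sY1 (snd w ! k)) (sY2 (snd w ! k)) (sS2 (snd w ! k)))"
    by (simp add: map_pmf_comp V_def psi1_def)
  also have "\<dots> = measure_pmf.expectation (joint1 PS W (Pl PS W f g K PT n k)) (\<lambda>c. psi1 PS W (sA c) (sX c) (sY1 c) (sY2 c) (sS2 c))"
    by (rule letter_exp[OF k])
  finally have e: "ent (map_pmf (\<lambda>w. (U w, V w)) QQ) - ent (map_pmf V QQ) = measure_pmf.expectation (joint1 PS W (Pl PS W f g K PT n k)) (\<lambda>c. psi1 PS W (sA c) (sX c) (sY1 c) (sY2 c) (sS2 c))"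
    using sw by (simp add: map_pmf_comp)
  show ?thesis using cm e unfolding U_def by linarith
qed

lemma X2_term:
  assumes k: "k < n"
  shows "ent (map_pmf (\<lambda>w. (F1 (snd w ! k), (take k (map F1 (snd w)), map F2 (snd w)))) QQ)
       - ent (map_pmf (\<lambda>w. (take k (map F1 (snd w)), map F2 (snd w))) QQ)
     \<le> ent (map_pmf (\<lambda>w. (F1 (snd w ! k), F2 (snd w ! k))) QQ) - ent (map_pmf (\<lambda>w. F2 (snd w ! k)) QQ)"
  by (rule cond_mono[OF fin, where \<psi>="\<lambda>(p, b). b ! k"]) (use k len in auto)

lemma R1_term:
  assumes k: "k < n"
  shows "ent (map_pmf (\<lambda>w. (F1 (snd w ! k), (take k (map F1 (snd w)), ()))) QQ)
       - ent (map_pmf (\<lambda>w. (take k (map F1 (snd w)), ())) QQ)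
     \<le> ent (map_pmf (\<lambda>w. F1 (snd w ! k)) QQ)"
proof -
  have "ent (map_pmf (\<lambda>w. (F1 (snd w ! k), (take k (map F1 (snd w)), ()))) QQ)
       - ent (map_pmf (\<lambda>w. (take k (map F1 (snd w)), ())) QQ)
     \<le> ent (map_pmf (\<lambda>w. (F1 (snd w ! k), ())) QQ) - ent (map_pmf (\<lambda>w. ()) QQ)"
    by (rule cond_mono[OF fin, where \<psi>="\<lambda>_. ()"]) simp
  moreover have "ent (map_pmf (\<lambda>w. (F1 (snd w ! k), ())) QQ) = ent (map_pmf (\<lambda>w. F1 (snd w ! k)) QQ)"
    by (rule ent_map_eq[OF fin, where \<phi>="\<lambda>x. (x, ())" and \<psi>=fst]) auto
  ultimately show ?thesis by (simp add: ent_const)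
qed

lemma R3_term:
  assumes k: "k < n"
  shows "ent (map_pmf (\<lambda>w. ((\<lambda>c. (sY1 c, sS1 c)) (snd w ! k), (take k (map (\<lambda>c. (sY1 c, sS1 c)) (snd w)), fst w))) QQ)
       - ent (map_pmf (\<lambda>w. (take k (map (\<lambda>c. (sY1 c, sS1 c)) (snd w)), fst w)) QQ)
     \<ge> measure_pmf.expectation (joint1 PS W (Pl PS W f g K PT n k)) (\<lambda>c. psi2 PS W (sA c) (sX c))"
proof -
  define V where "V w = ((fst w, take k (snd w)), (sA (snd w ! k), sX (snd w ! k)))" for w :: "nat \<times> ('a,'x,'s1,'s2,'y1,'y2) sym list"
  define U where "U w = (sY1 (snd w ! k), sS1 (snd w ! k))" for w :: "nat \<times> ('a,'x,'s1,'s2,'y1,'y2) sym list"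
  define \<psi> where "\<psi> = (\<lambda>((m::nat, p::('a,'x,'s1,'s2,'y1,'y2) sym list), ax::'a \<times> 'x). (map (\<lambda>c. (sY1 c, sS1 c)) p, m))"
  have cm: "ent (map_pmf (\<lambda>w. (U w, V w)) QQ) - ent (map_pmf V QQ)
      \<le> ent (map_pmf (\<lambda>w. (U w, (take k (map (\<lambda>c. (sY1 c, sS1 c)) (snd w)), fst w))) QQ)
       - ent (map_pmf (\<lambda>w. (take k (map (\<lambda>c. (sY1 c, sS1 c)) (snd w)), fst w)) QQ)"
    by (rule cond_mono[OF fin, where \<psi>=\<psi>]) (simp add: \<psi>_def V_def take_map)
  have "kform (map_pmf (\<lambda>(v, u). (v, (\<lambda>(s, y). (fst y, fst s)) u)) (map_pmf (\<lambda>w. (((fst w, take k (snd w)), (sA (snd w ! k), sX (snd w ! k))),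
      ((sS1 (snd w ! k), sS2 (snd w ! k)), (sY1 (snd w ! k), sY2 (snd w ! k))))) QQ))
      (\<lambda>v. map_pmf (\<lambda>(s, y). (fst y, fst s)) ((\<lambda>(z, (a, x)). kap PS W a x) v))"
    by (rule kform_map_snd[OF kQ_R[OF k]])
  then have kf: "kform (map_pmf (\<lambda>w. (V w, U w)) QQ) (\<lambda>v. map_pmf (\<lambda>(s, y). (fst y, fst s)) (kap PS W (fst (snd v)) (snd (snd v))))"
    by (simp add: map_pmf_comp V_def U_def split_beta)
  have inj: "inj (\<lambda>(a :: _ \<times> _, b :: _). (b, a))" by (auto simp: inj_on_def)
  have sw: "ent (map_pmf (\<lambda>w. (U w, V w)) QQ) = ent (map_pmf (\<lambda>w. (V w, U w)) QQ)"
  proof -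
    have "map_pmf (\<lambda>w. (U w, V w)) QQ = map_pmf (\<lambda>(a, b). (b, a)) (map_pmf (\<lambda>w. (V w, U w)) QQ)"
      by (simp add: map_pmf_comp)
    then show ?thesis using ent_map_inj[OF inj] by simp
  qed
  have "ent (map_pmf (\<lambda>w. (V w, U w)) QQ) - ent (map_pmf fst (map_pmf (\<lambda>w. (V w, U w)) QQ))
     = measure_pmf.expectation (map_pmf fst (map_pmf (\<lambda>w. (V w, U w)) QQ))
        (\<lambda>v. ent ((\<lambda>v. map_pmf (\<lambda>(s, y). (fst y, fst s)) (kap PS W (fst (snd v)) (snd (snd v)))) v))"
    by (rule kform_ent_exp[OF kf]) (simp add: fin)
  also have "\<dots> = measure_pmf.expectation QQ (\<lambda>w. psi2 PS W (sA (snd w ! k)) (sX (snd w ! k)))"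
    by (simp add: map_pmf_comp V_def psi2_def)
  also have "\<dots> = measure_pmf.expectation (joint1 PS W (Pl PS W f g K PT n k)) (\<lambda>c. psi2 PS W (sA c) (sX c))"
    by (rule letter_exp[OF k])
  finally have e: "ent (map_pmf (\<lambda>w. (U w, V w)) QQ) - ent (map_pmf V QQ) = measure_pmf.expectation (joint1 PS W (Pl PS W f g K PT n k)) (\<lambda>c. psi2 PS W (sA c) (sX c))"
    using sw by (simp add: map_pmf_comp)
  show ?thesis using cm e unfolding U_def by simp
qed

end


lemma zip_map2: "zip (map a h) (map b h) = map (\<lambda>c. (a c, b c)) h"
  by (induction h) auto

context
  fixes PS :: "'a::finite \<Rightarrow> ('s1::finite \<times> 's2::finite) pmf"
    and W :: "'s1 \<Rightarrow> 's2 \<Rightarrow> 'x::finite \<Rightarrow> ('y1::finite \<times> 'y2::finite) pmf"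
    and f :: "nat \<Rightarrow> ('y1 \<times> 'y2) list \<Rightarrow> nat \<Rightarrow> 'a"
    and g :: "nat \<Rightarrow> 'a \<Rightarrow> ('y1 \<times> 'y2) list \<Rightarrow> nat \<Rightarrow> 'x"
    and K :: nat and PT :: "nat pmf" and n :: nat
    and dec :: "'y1 list \<Rightarrow> 's1 list \<Rightarrow> nat"
  assumes K: "K > 0"
begin

abbreviation "Qc \<equiv> Q1 PS W f g K PT n"
abbreviation "Ev \<equiv> (\<lambda>w. dec (map sY1 (snd w)) (map sS1 (snd w)) \<noteq> fst w)"
abbreviation "JJ k \<equiv> joint1 PS W (Pl PS W f g K PT n k)"

lemma finc: "finite (set_pmf Qc)" by (rule Q1_fin[OF K])
lemma lenc: "w \<in> set_pmf Qc \<Longrightarrow> length (snd w) = n" by (rule Q1_len)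

lemma fano_code:
  "ent (map_pmf (\<lambda>w. (fst w, map (\<lambda>c. (sY1 c, sS1 c)) (snd w))) Qc) - ent (map_pmf (\<lambda>w. map (\<lambda>c. (sY1 c, sS1 c)) (snd w)) Qc)
   \<le> ent (map_pmf Ev Qc) + measure_pmf.prob Qc {w. Ev w} * log 2 (real K)"
proof -
  have "ent (map_pmf (\<lambda>w. (fst w, map (\<lambda>c. (sY1 c, sS1 c)) (snd w))) Qc) - ent (map_pmf (\<lambda>w. map (\<lambda>c. (sY1 c, sS1 c)) (snd w)) Qc)
   \<le> ent (map_pmf (\<lambda>w. (\<lambda>l. dec (map fst l) (map snd l)) (map (\<lambda>c. (sY1 c, sS1 c)) (snd w)) \<noteq> fst w) Qc)
     + measure_pmf.prob Qc {w. (\<lambda>l. dec (map fst l) (map snd l)) (map (\<lambda>c. (sY1 c, sS1 c)) (snd w)) \<noteq> fst w} * log 2 (real K)"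
    by (rule fano[OF finc]) (rule Q1_m[OF K])
  then show ?thesis by (simp add: o_def)
qed

lemma rel_chain:
  "ent (map_pmf fst Qc) \<le> ent (map_pmf Ev Qc) + measure_pmf.prob Qc {w. Ev w} * log 2 (real K) + (\<Sum>k<n. G2 PS W (JJ k))"
proof -
  let ?F = "\<lambda>c. (sY1 c, sS1 c)"
  let ?L1 = "\<lambda>w. map ?F (snd w)"
  have t1: "ent (map_pmf (\<lambda>w. (?L1 w, ())) Qc) - ent (map_pmf (\<lambda>w. ()) Qc)
      = (\<Sum>k<n. ent (map_pmf (\<lambda>w. (?F (snd w ! k), (take k (?L1 w), ()))) Qc) - ent (map_pmf (\<lambda>w. (take k (?L1 w), ())) Qc))"
    by (rule telescope[OF finc lenc])
  also have "\<dots> \<le> (\<Sum>k<n. ent (map_pmf (\<lambda>w. ?F (snd w ! k)) Qc))"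
    by (intro sum_mono R1_term[OF K]) simp
  also have "\<dots> = (\<Sum>k<n. ent (map_pmf ?F (JJ k)))"
    by (intro sum.cong refl letter_ent[OF K]) simp
  finally have a1: "ent (map_pmf (\<lambda>w. (?L1 w, ())) Qc) - ent (map_pmf (\<lambda>w. ()) Qc) \<le> (\<Sum>k<n. ent (map_pmf ?F (JJ k)))" .
  have a1': "ent (map_pmf (\<lambda>w. (?L1 w, ())) Qc) = ent (map_pmf ?L1 Qc)"
    by (rule ent_map_eq[OF finc, where \<phi>="\<lambda>x. (x, ())" and \<psi>=fst]) auto
  have t2: "ent (map_pmf (\<lambda>w. (?L1 w, fst w)) Qc) - ent (map_pmf fst Qc)
      = (\<Sum>k<n. ent (map_pmf (\<lambda>w. (?F (snd w ! k), (take k (?L1 w), fst w))) Qc) - ent (map_pmf (\<lambda>w. (take k (?L1 w), fst w)) Qc))"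
    by (rule telescope[OF finc lenc])
  also have "\<dots> \<ge> (\<Sum>k<n. measure_pmf.expectation (JJ k) (\<lambda>c. psi2 PS W (sA c) (sX c)))"
    by (intro sum_mono R3_term[OF K]) simp
  finally have a2: "ent (map_pmf (\<lambda>w. (?L1 w, fst w)) Qc) - ent (map_pmf fst Qc) \<ge> (\<Sum>k<n. measure_pmf.expectation (JJ k) (\<lambda>c. psi2 PS W (sA c) (sX c)))" .
  have a2': "ent (map_pmf (\<lambda>w. (?L1 w, fst w)) Qc) = ent (map_pmf (\<lambda>w. (fst w, ?L1 w)) Qc)"
    by (rule ent_map_eq[OF finc, where \<phi>="\<lambda>(a, b). (b, a)" and \<psi>="\<lambda>(a, b). (b, a)"]) auto
  have G: "(\<Sum>k<n. G2 PS W (JJ k)) = (\<Sum>k<n. ent (map_pmf ?F (JJ k))) - (\<Sum>k<n. measure_pmf.expectation (JJ k) (\<lambda>c. psi2 PS W (sA c) (sX c)))"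
    unfolding G2_def by (simp add: sum_subtractf)
  show ?thesis using a1 a1' a2 a2' G fano_code by (simp add: ent_const)
qed

lemma sec_chain:
  "ent (map_pmf fst Qc) \<le> (ent (map_pmf fst Qc) + ent (map_pmf (\<lambda>w. (map sY2 (snd w), map sS2 (snd w))) Qc)
        - ent (map_pmf (\<lambda>w. (fst w, (map sY2 (snd w), map sS2 (snd w)))) Qc))
     + ent (map_pmf Ev Qc) + measure_pmf.prob Qc {w. Ev w} * log 2 (real K) + (\<Sum>k<n. G1 PS W (JJ k))"
proof -
  let ?F1 = "\<lambda>c. (sY1 c, sS1 c)" and ?F2 = "\<lambda>c. (sY2 c, sS2 c)" and ?yy = "\<lambda>c. (sY1 c, sY2 c, sS2 c)"
  let ?L1 = "\<lambda>w. map ?F1 (snd w)" and ?L2 = "\<lambda>w. map ?F2 (snd w)"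
  let ?Z2 = "\<lambda>w. (map sY2 (snd w), map sS2 (snd w))"
  have e1: "ent (map_pmf (\<lambda>w. (fst w, ?Z2 w)) Qc) = ent (map_pmf (\<lambda>w. (fst w, ?L2 w)) Qc)"
    by (rule ent_map_eq[OF finc, where \<phi>="\<lambda>(m, l). (m, (map fst l, map snd l))" and \<psi>="\<lambda>(m, a, b). (m, zip a b)"])
       (auto simp: zip_map2)
  have e2: "ent (map_pmf ?Z2 Qc) = ent (map_pmf ?L2 Qc)"
    by (rule ent_map_eq[OF finc, where \<phi>="\<lambda>l. (map fst l, map snd l)" and \<psi>="\<lambda>(a, b). zip a b"])
       (auto simp: zip_map2)
  have x1: "ent (map_pmf (\<lambda>w. (fst w, (?L1 w, ?L2 w))) Qc) - ent (map_pmf (\<lambda>w. (?L1 w, ?L2 w)) Qc)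
      \<le> ent (map_pmf (\<lambda>w. (fst w, ?L1 w)) Qc) - ent (map_pmf ?L1 Qc)"
    by (rule cond_mono[OF finc, where \<psi>=fst]) simp
  have "ent (map_pmf (\<lambda>w. (?L1 w, ?L2 w)) Qc) - ent (map_pmf ?L2 Qc)
      = (\<Sum>k<n. ent (map_pmf (\<lambda>w. (?F1 (snd w ! k), (take k (?L1 w), ?L2 w))) Qc) - ent (map_pmf (\<lambda>w. (take k (?L1 w), ?L2 w)) Qc))"
    by (rule telescope[OF finc lenc])
  also have "\<dots> \<le> (\<Sum>k<n. ent (map_pmf (\<lambda>w. (?F1 (snd w ! k), ?F2 (snd w ! k))) Qc) - ent (map_pmf (\<lambda>w. ?F2 (snd w ! k)) Qc))"
    by (intro sum_mono X2_term[OF K]) simp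
  also have "\<dots> = (\<Sum>k<n. ent (map_pmf (\<lambda>c. (?F1 c, ?F2 c)) (JJ k)) - ent (map_pmf ?F2 (JJ k)))"
  proof (intro sum.cong refl)
    fix k assume "k \<in> {..<n}"
    then have k: "k < n" by simp
    show "ent (map_pmf (\<lambda>w. (?F1 (snd w ! k), ?F2 (snd w ! k))) Qc) - ent (map_pmf (\<lambda>w. ?F2 (snd w ! k)) Qc)
       = ent (map_pmf (\<lambda>c. (?F1 c, ?F2 c)) (JJ k)) - ent (map_pmf ?F2 (JJ k))"
      using letter_ent[OF K k, where F="\<lambda>c. (?F1 c, ?F2 c)" and PS=PS and W=W and f=f and g=g and PT=PT]
        letter_ent[OF K k, where F="?F2" and PS=PS and W=W and f=f and g=g and PT=PT] by simp
  qed
  finally have x2: "ent (map_pmf (\<lambda>w. (?L1 w, ?L2 w)) Qc) - ent (map_pmf ?L2 Qc)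
      \<le> (\<Sum>k<n. ent (map_pmf (\<lambda>c. (?F1 c, ?F2 c)) (JJ k)) - ent (map_pmf ?F2 (JJ k)))" .
  let ?B = "\<lambda>w. (fst w, map ?yy (snd w))"
  have "ent (map_pmf (\<lambda>w. (map sS1 (snd w), ?B w)) Qc) - ent (map_pmf ?B Qc)
      = (\<Sum>k<n. ent (map_pmf (\<lambda>w. (sS1 (snd w ! k), (take k (map sS1 (snd w)), ?B w))) Qc) - ent (map_pmf (\<lambda>w. (take k (map sS1 (snd w)), ?B w)) Qc))"
    by (rule telescope[OF finc lenc])
  also have "\<dots> \<ge> (\<Sum>k<n. measure_pmf.expectation (JJ k) (\<lambda>c. psi1 PS W (sA c) (sX c) (sY1 c) (sY2 c) (sS2 c)))"
    by (intro sum_mono X3_term[OF K]) simp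
  finally have x3a: "ent (map_pmf (\<lambda>w. (map sS1 (snd w), ?B w)) Qc) - ent (map_pmf ?B Qc)
      \<ge> (\<Sum>k<n. measure_pmf.expectation (JJ k) (\<lambda>c. psi1 PS W (sA c) (sX c) (sY1 c) (sY2 c) (sS2 c)))" .
  have x3b: "ent (map_pmf (\<lambda>w. (map sS1 (snd w), ?B w)) Qc) = ent (map_pmf (\<lambda>w. (fst w, (?L1 w, ?L2 w))) Qc)"
    by (rule ent_map_eq[OF finc, where \<phi>="\<lambda>(m, l1, l2). (map snd l1, (m, zip (map fst l1) (zip (map fst l2) (map snd l2))))"
          and \<psi>="\<lambda>(s1s, m, yys). (m, zip (map fst yys) s1s, zip (map (fst \<circ> snd) yys) (map (snd \<circ> snd) yys))"])
       (auto simp: zip_map2 o_def)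
  have x3c: "ent (map_pmf (\<lambda>w. (fst w, ?L2 w)) Qc) \<le> ent (map_pmf ?B Qc)"
    by (rule ent_map_le[OF finc, where \<phi>="\<lambda>(m, yys). (m, zip (map (fst \<circ> snd) yys) (map (snd \<circ> snd) yys))"])
       (auto simp: zip_map2 o_def)
  have x4: "ent (map_pmf (\<lambda>w. (fst w, (?L1 w, ?L2 w))) Qc) = ent (map_pmf (\<lambda>w. (?L1 w, (fst w, ?L2 w))) Qc)"
    by (rule ent_map_eq[OF finc, where \<phi>="\<lambda>(a, b, c). (b, a, c)" and \<psi>="\<lambda>(a, b, c). (b, a, c)"]) auto
  have G: "(\<Sum>k<n. G1 PS W (JJ k)) = (\<Sum>k<n. ent (map_pmf (\<lambda>c. (?F1 c, ?F2 c)) (JJ k)) - ent (map_pmf ?F2 (JJ k)))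
       - (\<Sum>k<n. measure_pmf.expectation (JJ k) (\<lambda>c. psi1 PS W (sA c) (sX c) (sY1 c) (sY2 c) (sS2 c)))"
    unfolding G1_def by (simp add: sum_subtractf)
  show ?thesis using e1 e2 x1 x2 x3a x3b x3c x4 G fano_code by linarith
qed

end


definition RhoG where
  "RhoG PS W G d c = rhoK (map_pmf G (bpost (kap PS W (sA c) (sX c)) (sY1 c, sY2 c))) d"

context
  fixes PS :: "'a::finite \<Rightarrow> ('s1::finite \<times> 's2::finite) pmf"
    and W :: "'s1 \<Rightarrow> 's2 \<Rightarrow> 'x::finite \<Rightarrow> ('y1::finite \<times> 'y2::finite) pmf"
    and f :: "nat \<Rightarrow> ('y1 \<times> 'y2) list \<Rightarrow> nat \<Rightarrow> 'a"
    and g :: "nat \<Rightarrow> 'a \<Rightarrow> ('y1 \<times> 'y2) list \<Rightarrow> nat \<Rightarrow> 'x"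
    and K :: nat and PT :: "nat pmf" and n :: nat
  assumes K: "K > 0"
begin

lemma dist_letter:
  fixes G :: "'s1 \<times> 's2 \<Rightarrow> 's::finite" and d :: "'s \<Rightarrow> 'e::finite \<Rightarrow> real"
    and est :: "'x list \<Rightarrow> 'a list \<Rightarrow> 'y1 list \<Rightarrow> 'y2 list \<Rightarrow> 'e"
  assumes i: "i < n"
  shows "measure_pmf.expectation (joint1 PS W (Pl PS W f g K PT n i)) (RhoG PS W G d)
     \<le> measure_pmf.expectation (Q1 PS W f g K PT n) (\<lambda>w. d (G (sS1 (snd w ! i), sS2 (snd w ! i))) (est (map sX (snd w)) (map sA (snd w)) (map sY1 (snd w)) (map sY2 (snd w))))"
proof -
  let ?Q = "Q1 PS W f g K PT n"
  let ?D = "map_pmf (\<lambda>w. ((map sX (snd w), map sA (snd w), map sY1 (snd w), map sY2 (snd w)), G (sS1 (snd w ! i), sS2 (snd w ! i)))) ?Q"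
  let ?k = "\<lambda>(xs, as, y1s, y2s). map_pmf G (bpost (kap PS W (as ! i) (xs ! i)) (y1s ! i, y2s ! i))"
  have kf: "kform ?D ?k" by (rule kQ_D[OF i])
  have finQ: "finite (set_pmf ?Q)" by (rule Q1_fin[OF K])
  have "measure_pmf.expectation (map_pmf fst ?D) (\<lambda>v. rhoK (?k v) d)
     \<le> measure_pmf.expectation ?D (\<lambda>(v, s). d s ((\<lambda>(xs, as, y1s, y2s). est xs as y1s y2s) v))"
    by (rule dist_lower_gen[OF kf]) (simp add: finQ)
  also have "\<dots> = measure_pmf.expectation ?Q (\<lambda>w. d (G (sS1 (snd w ! i), sS2 (snd w ! i))) (est (map sX (snd w)) (map sA (snd w)) (map sY1 (snd w)) (map sY2 (snd w))))"
    by simp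
  finally have a: "measure_pmf.expectation (map_pmf fst ?D) (\<lambda>v. rhoK (?k v) d) \<le> \<dots>" .
  have "measure_pmf.expectation (map_pmf fst ?D) (\<lambda>v. rhoK (?k v) d)
      = measure_pmf.expectation ?Q (\<lambda>w. rhoK (?k (map sX (snd w), map sA (snd w), map sY1 (snd w), map sY2 (snd w))) d)"
    by (simp add: map_pmf_comp)
  also have "\<dots> = measure_pmf.expectation ?Q (\<lambda>w. RhoG PS W G d (snd w ! i))"
  proof -
    have "(\<Sum>w\<in>set_pmf ?Q. pmf ?Q w * rhoK (?k (map sX (snd w), map sA (snd w), map sY1 (snd w), map sY2 (snd w))) d)
        = (\<Sum>w\<in>set_pmf ?Q. pmf ?Q w * RhoG PS W G d (snd w ! i))"
    proof (intro sum.cong refl)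
      fix w assume w: "w \<in> set_pmf ?Q"
      have "length (snd w) = n" using Q1_len[OF w] .
      then show "pmf ?Q w * rhoK (?k (map sX (snd w), map sA (snd w), map sY1 (snd w), map sY2 (snd w))) d
          = pmf ?Q w * RhoG PS W G d (snd w ! i)"
        using i by (simp add: RhoG_def)
    qed
    then show ?thesis by (simp add: expect_fin[OF finQ])
  qed
  also have "\<dots> = measure_pmf.expectation (joint1 PS W (Pl PS W f g K PT n i)) (RhoG PS W G d)"
    by (rule letter_exp[OF K i])
  finally show ?thesis using a by simp
qed

end


lemma expect_univ:
  fixes F :: "'c::finite \<Rightarrow> real"
  shows "measure_pmf.expectation M F = (\<Sum>c\<in>UNIV. pmf M c * F c)"
  by (subst integral_measure_pmf_real[where A=UNIV]) (auto simp: mult.commute)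

lemma expect_bind_fin:
  fixes F :: "'c::finite \<Rightarrow> real"
  assumes fin: "finite (set_pmf U)"
  shows "measure_pmf.expectation (bind_pmf U J) F = measure_pmf.expectation U (\<lambda>i. measure_pmf.expectation (J i) F)"
proof -
  have p: "pmf (bind_pmf U J) c = (\<Sum>i\<in>set_pmf U. pmf (J i) c * pmf U i)" for c
    unfolding pmf_bind by (subst integral_measure_pmf_real[where A="set_pmf U"]) (auto simp: fin)
  have "measure_pmf.expectation (bind_pmf U J) F = (\<Sum>c\<in>UNIV. (\<Sum>i\<in>set_pmf U. pmf (J i) c * pmf U i) * F c)"
    by (simp add: expect_univ p)
  also have "\<dots> = (\<Sum>i\<in>set_pmf U. pmf U i * (\<Sum>c\<in>UNIV. pmf (J i) c * F c))"
    by (simp add: sum_distrib_left sum_distrib_right sum.swap[of _ "set_pmf U"] mult.commute mult.left_commute)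
  also have "\<dots> = measure_pmf.expectation U (\<lambda>i. measure_pmf.expectation (J i) F)"
    by (simp add: expect_fin[OF fin] expect_univ)
  finally show ?thesis .
qed

lemma conc_cond:
  fixes U :: "'c::finite \<Rightarrow> 'u" and V :: "'c \<Rightarrow> 'v"
  assumes fin: "finite (set_pmf UU)"
  shows "measure_pmf.expectation UU (\<lambda>i. ent (map_pmf (\<lambda>c. (U c, V c)) (J i)) - ent (map_pmf V (J i)))
     \<le> ent (map_pmf (\<lambda>c. (U c, V c)) (bind_pmf UU J)) - ent (map_pmf V (bind_pmf UU J))"
proof -
  define D where "D = bind_pmf UU (\<lambda>i. map_pmf (Pair i) (J i))"
  have finD: "finite (set_pmf D)"
  proof -
    have "set_pmf D \<subseteq> set_pmf UU \<times> UNIV" unfolding D_def by auto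
    moreover have "finite (set_pmf UU \<times> (UNIV :: 'c set))" using fin by simp
    ultimately show ?thesis using finite_subset by blast
  qed
  have sndD: "map_pmf snd D = bind_pmf UU J"
    unfolding D_def by (simp add: map_bind_pmf map_pmf_comp)
  have mapD: "map_pmf (\<lambda>w. X (snd w)) D = map_pmf X (bind_pmf UU J)" for X :: "'c \<Rightarrow> 'zz"
    by (subst sndD[symmetric]) (simp add: map_pmf_comp)
  have kfX: "kform (map_pmf (\<lambda>w. (fst w, X (snd w))) D) (\<lambda>i. map_pmf X (J i))" for X :: "'c \<Rightarrow> 'zz"
  proof -
    have m: "map_pmf fst (map_pmf (\<lambda>w. (fst w, X (snd w))) D) = UU"
      unfolding D_def by (simp add: map_bind_pmf map_pmf_comp bind_pmf_const map_pmf_def[symmetric])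
    show ?thesis unfolding kform_def m unfolding D_def
      by (simp add: map_bind_pmf map_pmf_comp)
  qed
  have entX: "ent (map_pmf (\<lambda>w. (fst w, X (snd w))) D) = ent UU + measure_pmf.expectation UU (\<lambda>i. ent (map_pmf X (J i)))"
    for X :: "'c \<Rightarrow> 'zz"
  proof -
    have m: "map_pmf fst (map_pmf (\<lambda>w. (fst w, X (snd w))) D) = UU"
      unfolding D_def by (simp add: map_bind_pmf map_pmf_comp bind_pmf_const map_pmf_def[symmetric])
    have "ent (map_pmf (\<lambda>w. (fst w, X (snd w))) D) - ent (map_pmf fst (map_pmf (\<lambda>w. (fst w, X (snd w))) D))
       = measure_pmf.expectation (map_pmf fst (map_pmf (\<lambda>w. (fst w, X (snd w))) D)) (\<lambda>i. ent (map_pmf X (J i)))"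
      by (rule kform_ent_exp[OF kfX]) (simp add: finD)
    then show ?thesis unfolding m by simp
  qed
  have cm: "ent (map_pmf (\<lambda>w. (U (snd w), (fst w, V (snd w)))) D) - ent (map_pmf (\<lambda>w. (fst w, V (snd w))) D)
      \<le> ent (map_pmf (\<lambda>w. (U (snd w), V (snd w))) D) - ent (map_pmf (\<lambda>w. V (snd w)) D)"
    by (rule cond_mono[OF finD, where \<psi>=snd]) simp
  have ro: "ent (map_pmf (\<lambda>w. (U (snd w), (fst w, V (snd w)))) D) = ent (map_pmf (\<lambda>w. (fst w, (\<lambda>c. (U c, V c)) (snd w))) D)"
    by (rule ent_map_eq[OF finD, where \<phi>="\<lambda>(i, u, v). (u, i, v)" and \<psi>="\<lambda>(u, i, v). (i, u, v)"]) auto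
  have int: "measure_pmf.expectation UU (\<lambda>i. ent (map_pmf (\<lambda>c. (U c, V c)) (J i)) - ent (map_pmf V (J i)))
     = measure_pmf.expectation UU (\<lambda>i. ent (map_pmf (\<lambda>c. (U c, V c)) (J i))) - measure_pmf.expectation UU (\<lambda>i. ent (map_pmf V (J i)))"
    using fin by (simp add: expect_fin sum_subtractf right_diff_distrib)
  have "ent (map_pmf (\<lambda>w. (U (snd w), V (snd w))) D) = ent (map_pmf (\<lambda>c. (U c, V c)) (bind_pmf UU J))"
    using mapD[of "\<lambda>c. (U c, V c)"] by simp
  moreover have "ent (map_pmf (\<lambda>w. V (snd w)) D) = ent (map_pmf V (bind_pmf UU J))"
    using mapD[of V] by simp
  ultimately show ?thesis using cm ro entX[of "\<lambda>c. (U c, V c)"] entX[of V] int by linarith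
qed


lemma joint1_bind: "joint1 PS W (bind_pmf UU P) = bind_pmf UU (\<lambda>i. joint1 PS W (P i))"
  unfolding joint1_eq by (simp add: bind_assoc_pmf)

lemma ent_uniform: "K > 0 \<Longrightarrow> ent (pmf_of_set {..<K}) = log 2 (real K)"
  unfolding ent_def by (simp add: set_pmf_of_set lessThan_empty_iff log_divide)

lemma F1_G1: "cent (map_pmf (\<lambda>c. ((sY1 c, sS1 c), (sY2 c, sS2 c))) (joint1 PS W P))
    - cent (map_pmf (\<lambda>c. (sS1 c, (sY1 c, sY2 c, sS2 c, sX c, sA c))) (joint1 PS W P)) = G1 PS W (joint1 PS W P)"
  for PS :: "'a::finite \<Rightarrow> ('s1::finite \<times> 's2::finite) pmf"
    and W :: "'s1 \<Rightarrow> 's2 \<Rightarrow> 'x::finite \<Rightarrow> ('y1::finite \<times> 'y2::finite) pmf"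
  unfolding G1_def cent_S1 by (simp add: cent_def map_pmf_comp)

lemma F2_G2: "minf (map_pmf (\<lambda>c. ((sX c, sA c), (sY1 c, sS1 c))) (joint1 PS W P)) = G2 PS W (joint1 PS W P)"
  for PS :: "'a::finite \<Rightarrow> ('s1::finite \<times> 's2::finite) pmf"
    and W :: "'s1 \<Rightarrow> 's2 \<Rightarrow> 'x::finite \<Rightarrow> ('y1::finite \<times> 'y2::finite) pmf"
  unfolding G2_def minf_F2 ..


context
  fixes PS :: "'a::finite \<Rightarrow> ('s1::finite \<times> 's2::finite) pmf"
    and W :: "'s1 \<Rightarrow> 's2 \<Rightarrow> 'x::finite \<Rightarrow> ('y1::finite \<times> 'y2::finite) pmf"
begin

lemma expect_diff_fin:
  fixes A B :: "'i \<Rightarrow> real"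
  assumes "finite (set_pmf UU)"
  shows "measure_pmf.expectation UU (\<lambda>i. A i - B i) = measure_pmf.expectation UU A - measure_pmf.expectation UU B"
  using assms by (simp add: expect_fin sum_subtractf right_diff_distrib)

lemma G1_mix:
  fixes J :: "'i \<Rightarrow> ('a,'x,'s1,'s2,'y1,'y2) sym pmf"
  assumes fin: "finite (set_pmf UU)"
  shows "measure_pmf.expectation UU (\<lambda>i. G1 PS W (J i)) \<le> G1 PS W (bind_pmf UU J)"
proof -
  have c: "measure_pmf.expectation UU (\<lambda>i. ent (map_pmf (\<lambda>c. ((sY1 c, sS1 c), (sY2 c, sS2 c))) (J i)) - ent (map_pmf (\<lambda>c. (sY2 c, sS2 c)) (J i)))
     \<le> ent (map_pmf (\<lambda>c. ((sY1 c, sS1 c), (sY2 c, sS2 c))) (bind_pmf UU J)) - ent (map_pmf (\<lambda>c. (sY2 c, sS2 c)) (bind_pmf UU J))"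
    by (rule conc_cond[OF fin, where U="\<lambda>c. (sY1 c, sS1 c)" and V="\<lambda>c. (sY2 c, sS2 c)" and J=J])
  have l: "measure_pmf.expectation (bind_pmf UU J) (\<lambda>c. psi1 PS W (sA c) (sX c) (sY1 c) (sY2 c) (sS2 c))
     = measure_pmf.expectation UU (\<lambda>i. measure_pmf.expectation (J i) (\<lambda>c. psi1 PS W (sA c) (sX c) (sY1 c) (sY2 c) (sS2 c)))"
    by (rule expect_bind_fin[OF fin])
  show ?thesis unfolding G1_def using c l by (simp add: expect_diff_fin[OF fin])
qed

lemma G2_mix:
  fixes J :: "'i \<Rightarrow> ('a,'x,'s1,'s2,'y1,'y2) sym pmf"
  assumes fin: "finite (set_pmf UU)"
  shows "measure_pmf.expectation UU (\<lambda>i. G2 PS W (J i)) \<le> G2 PS W (bind_pmf UU J)"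
proof -
  have c: "measure_pmf.expectation UU (\<lambda>i. ent (map_pmf (\<lambda>c. ((sY1 c, sS1 c), ())) (J i)) - ent (map_pmf (\<lambda>c. ()) (J i)))
     \<le> ent (map_pmf (\<lambda>c. ((sY1 c, sS1 c), ())) (bind_pmf UU J)) - ent (map_pmf (\<lambda>c. ()) (bind_pmf UU J))"
    by (rule conc_cond[OF fin, where U="\<lambda>c. (sY1 c, sS1 c)" and V="\<lambda>c. ()" and J=J])
  have inj: "inj (\<lambda>x :: 'y1 \<times> 's1. (x, ()))" by (auto simp: inj_on_def)
  have e: "ent (map_pmf (\<lambda>c. ((sY1 c, sS1 c), ())) X) = ent (map_pmf (\<lambda>c. (sY1 c, sS1 c)) X)" for X :: "('a,'x,'s1,'s2,'y1,'y2) sym pmf"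
  proof -
    have "map_pmf (\<lambda>c. ((sY1 c, sS1 c), ())) X = map_pmf (\<lambda>x. (x, ())) (map_pmf (\<lambda>c. (sY1 c, sS1 c)) X)"
      by (simp add: map_pmf_comp)
    then show ?thesis using ent_map_inj[OF inj] by simp
  qed
  have l: "measure_pmf.expectation (bind_pmf UU J) (\<lambda>c. psi2 PS W (sA c) (sX c))
     = measure_pmf.expectation UU (\<lambda>i. measure_pmf.expectation (J i) (\<lambda>c. psi2 PS W (sA c) (sX c)))"
    by (rule expect_bind_fin[OF fin])
  show ?thesis unfolding G2_def using c l by (simp add: expect_diff_fin[OF fin] e ent_const)
qed

end

lemma expect_uniform:
  fixes h :: "nat \<Rightarrow> real"
  assumes "n > 0"
  shows "measure_pmf.expectation (pmf_of_set {..<n}) h = (\<Sum>i<n. h i) / n"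
  using assms by (subst integral_pmf_of_set) (auto simp: lessThan_empty_iff)


context
  fixes PS :: "'a::finite \<Rightarrow> ('s1::finite \<times> 's2::finite) pmf"
    and W :: "'s1 \<Rightarrow> 's2 \<Rightarrow> 'x::finite \<Rightarrow> ('y1::finite \<times> 'y2::finite) pmf"
    and f :: "nat \<Rightarrow> ('y1 \<times> 'y2) list \<Rightarrow> nat \<Rightarrow> 'a"
    and g :: "nat \<Rightarrow> 'a \<Rightarrow> ('y1 \<times> 'y2) list \<Rightarrow> nat \<Rightarrow> 'x"
    and K :: nat and PT :: "nat pmf" and n :: nat
    and dec :: "'y1 list \<Rightarrow> 's1 list \<Rightarrow> nat"
  assumes K: "K > 0" and n: "n > 0"
begin

abbreviation "Pb \<equiv> bind_pmf (pmf_of_set {..<n}) (\<lambda>i. Pl PS W f g K PT n i)"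
abbreviation "PP \<equiv> code_dist PS W n K PT f g"
abbreviation "Pe \<equiv> measure_pmf.prob PP {(m, tk, h). dec (map sY1 h) (map sS1 h) \<noteq> m}"

lemma fstQ1: "map_pmf fst (Q1 PS W f g K PT n) = pmf_of_set {..<K}"
  unfolding Q1_def Qn_def by (simp add: map_bind_pmf map_pmf_comp bind_return_pmf')

lemma Pe_eq: "Pe = measure_pmf.prob (Q1 PS W f g K PT n) {w. dec (map sY1 (snd w)) (map sS1 (snd w)) \<noteq> fst w}"
  unfolding Q1_def code_dist_Qn by (simp add: vimage_def case_prod_unfold)

lemma minf_eq: "minf (map_pmf (\<lambda>(m, tk, h). (m, (map sY2 h, map sS2 h))) PP)
  = ent (map_pmf fst (Q1 PS W f g K PT n)) + ent (map_pmf (\<lambda>w. (map sY2 (snd w), map sS2 (snd w))) (Q1 PS W f g K PT n))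
        - ent (map_pmf (\<lambda>w. (fst w, (map sY2 (snd w), map sS2 (snd w)))) (Q1 PS W f g K PT n))"
  unfolding minf_def Q1_def code_dist_Qn by (simp add: map_pmf_comp case_prod_unfold)

lemma sumG_le:
  fixes G :: "('a,'x,'s1,'s2,'y1,'y2) sym pmf \<Rightarrow> real"
  assumes mix: "\<And>J :: nat \<Rightarrow> ('a,'x,'s1,'s2,'y1,'y2) sym pmf. measure_pmf.expectation (pmf_of_set {..<n}) (\<lambda>i. G (J i)) \<le> G (bind_pmf (pmf_of_set {..<n}) J)"
  shows "(\<Sum>k<n. G (joint1 PS W (Pl PS W f g K PT n k))) \<le> real n * G (joint1 PS W Pb)"
proof -
  have "(\<Sum>k<n. G (joint1 PS W (Pl PS W f g K PT n k))) = real n * measure_pmf.expectation (pmf_of_set {..<n}) (\<lambda>k. G (joint1 PS W (Pl PS W f g K PT n k)))"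
    using n by (simp add: expect_uniform)
  also have "\<dots> \<le> real n * G (bind_pmf (pmf_of_set {..<n}) (\<lambda>k. joint1 PS W (Pl PS W f g K PT n k)))"
    by (intro mult_left_mono mix) simp
  also have "bind_pmf (pmf_of_set {..<n}) (\<lambda>k. joint1 PS W (Pl PS W f g K PT n k)) = joint1 PS W Pb"
    by (simp add: joint1_bind)
  finally show ?thesis .
qed

lemma bound_sec:
  "log 2 (real K) \<le> minf (map_pmf (\<lambda>(m, tk, h). (m, (map sY2 h, map sS2 h))) PP) + hb Pe + Pe * log 2 (real K)
     + real n * G1 PS W (joint1 PS W Pb)"
proof -
  have "ent (map_pmf fst (Q1 PS W f g K PT n)) \<le> (ent (map_pmf fst (Q1 PS W f g K PT n)) + ent (map_pmf (\<lambda>w. (map sY2 (snd w), map sS2 (snd w))) (Q1 PS W f g K PT n))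
        - ent (map_pmf (\<lambda>w. (fst w, (map sY2 (snd w), map sS2 (snd w)))) (Q1 PS W f g K PT n)))
     + ent (map_pmf (\<lambda>w. dec (map sY1 (snd w)) (map sS1 (snd w)) \<noteq> fst w) (Q1 PS W f g K PT n))
     + measure_pmf.prob (Q1 PS W f g K PT n) {w. dec (map sY1 (snd w)) (map sS1 (snd w)) \<noteq> fst w} * log 2 (real K)
     + (\<Sum>k<n. G1 PS W (joint1 PS W (Pl PS W f g K PT n k)))"
    by (rule sec_chain[OF K])
  moreover have "(\<Sum>k<n. G1 PS W (joint1 PS W (Pl PS W f g K PT n k))) \<le> real n * G1 PS W (joint1 PS W Pb)"
    by (rule sumG_le) (rule G1_mix, use n in \<open>simp add: set_pmf_of_set lessThan_empty_iff\<close>)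
  ultimately show ?thesis
    unfolding minf_eq Pe_eq ent_bool fstQ1 ent_uniform[OF K] by linarith
qed

lemma bound_rel:
  "log 2 (real K) \<le> hb Pe + Pe * log 2 (real K) + real n * G2 PS W (joint1 PS W Pb)"
proof -
  have "ent (map_pmf fst (Q1 PS W f g K PT n)) \<le> ent (map_pmf (\<lambda>w. dec (map sY1 (snd w)) (map sS1 (snd w)) \<noteq> fst w) (Q1 PS W f g K PT n))
     + measure_pmf.prob (Q1 PS W f g K PT n) {w. dec (map sY1 (snd w)) (map sS1 (snd w)) \<noteq> fst w} * log 2 (real K)
     + (\<Sum>k<n. G2 PS W (joint1 PS W (Pl PS W f g K PT n k)))"
    by (rule rel_chain[OF K])
  moreover have "(\<Sum>k<n. G2 PS W (joint1 PS W (Pl PS W f g K PT n k))) \<le> real n * G2 PS W (joint1 PS W Pb)"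
    by (rule sumG_le) (rule G2_mix, use n in \<open>simp add: set_pmf_of_set lessThan_empty_iff\<close>)
  ultimately show ?thesis
    unfolding Pe_eq ent_bool fstQ1 ent_uniform[OF K] by linarith
qed

lemma bound_dist:
  fixes G :: "'s1 \<times> 's2 \<Rightarrow> 's::finite" and d :: "'s \<Rightarrow> 'e::finite \<Rightarrow> real"
    and est :: "nat \<Rightarrow> 'x list \<Rightarrow> 'a list \<Rightarrow> 'y1 list \<Rightarrow> 'y2 list \<Rightarrow> 'e"
  shows "measure_pmf.expectation (joint1 PS W Pb) (RhoG PS W G d)
    \<le> measure_pmf.expectation PP (\<lambda>(m, tk, h). seq_dist n d (\<lambda>i. G (sS1 (h ! i), sS2 (h ! i)))
          (\<lambda>i. est i (map sX h) (map sA h) (map sY1 h) (map sY2 h)))"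
proof -
  let ?Q = "Q1 PS W f g K PT n"
  let ?t = "\<lambda>i w. d (G (sS1 (snd w ! i), sS2 (snd w ! i))) (est i (map sX (snd w)) (map sA (snd w)) (map sY1 (snd w)) (map sY2 (snd w)))"
  have finQ: "finite (set_pmf ?Q)" by (rule Q1_fin[OF K])
  have finU: "finite (set_pmf (pmf_of_set {..<n}))" using n by (simp add: set_pmf_of_set lessThan_empty_iff)
  have "measure_pmf.expectation PP (\<lambda>(m, tk, h). seq_dist n d (\<lambda>i. G (sS1 (h ! i), sS2 (h ! i)))
          (\<lambda>i. est i (map sX h) (map sA h) (map sY1 h) (map sY2 h)))
      = measure_pmf.expectation ?Q (\<lambda>w. (1 / real n) * (\<Sum>i<n. ?t i w))"
    unfolding Q1_def code_dist_Qn by (simp add: seq_dist_def case_prod_unfold)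
  also have "\<dots> = (1 / real n) * (\<Sum>i<n. measure_pmf.expectation ?Q (?t i))"
    by (simp add: expect_fin[OF finQ] sum_distrib_left sum.swap[of _ "set_pmf ?Q"] mult.left_commute)
  finally have e1: "measure_pmf.expectation PP (\<lambda>(m, tk, h). seq_dist n d (\<lambda>i. G (sS1 (h ! i), sS2 (h ! i)))
          (\<lambda>i. est i (map sX h) (map sA h) (map sY1 h) (map sY2 h))) = (1 / real n) * (\<Sum>i<n. measure_pmf.expectation ?Q (?t i))" .
  have "measure_pmf.expectation (joint1 PS W Pb) (RhoG PS W G d)
      = measure_pmf.expectation (pmf_of_set {..<n}) (\<lambda>i. measure_pmf.expectation (joint1 PS W (Pl PS W f g K PT n i)) (RhoG PS W G d))"
    unfolding joint1_bind by (rule expect_bind_fin[OF finU])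
  also have "\<dots> = (\<Sum>i<n. measure_pmf.expectation (joint1 PS W (Pl PS W f g K PT n i)) (RhoG PS W G d)) / real n"
    by (rule expect_uniform[OF n])
  also have "\<dots> \<le> (\<Sum>i<n. measure_pmf.expectation ?Q (?t i)) / real n"
    by (intro divide_right_mono sum_mono dist_letter[OF K]) auto
  finally show ?thesis using e1 by simp
qed

end


lemma bayes_J:
  fixes PS :: "'a::finite \<Rightarrow> ('s1::finite \<times> 's2::finite) pmf"
    and W :: "'s1 \<Rightarrow> 's2 \<Rightarrow> 'x::finite \<Rightarrow> ('y1::finite \<times> 'y2::finite) pmf"
    and d1 :: "'s1 \<Rightarrow> 'e1::finite \<Rightarrow> real"
  assumes b: "bayes_est (map_pmf (\<lambda>c. ((sA c, sX c, sY1 c, sY2 c), sS1 c)) (joint1 PS W P)) d1 e1"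
  shows "measure_pmf.expectation (joint1 PS W P) (\<lambda>c. d1 (sS1 c) (e1 (sA c, sX c, sY1 c, sY2 c)))
       = measure_pmf.expectation (joint1 PS W P) (RhoG PS W fst d1)"
proof -
  have "measure_pmf.expectation (map_pmf (\<lambda>c. ((sA c, sX c, sY1 c, sY2 c), sS1 c)) (joint1 PS W P)) (\<lambda>(v, s). d1 s (e1 v))
     = measure_pmf.expectation (map_pmf fst (map_pmf (\<lambda>c. ((sA c, sX c, sY1 c, sY2 c), sS1 c)) (joint1 PS W P)))
         (\<lambda>v. rhoK ((\<lambda>(a, x, y1, y2). map_pmf fst (bpost (kap PS W a x) (y1, y2))) v) d1)"
    by (rule bayes_val_gen[OF kf_Jd1 _ b]) simp
  then show ?thesis unfolding RhoG_def[abs_def] by (simp add: map_pmf_comp)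
qed

lemma bayes_J2:
  fixes PS :: "'a::finite \<Rightarrow> ('s1::finite \<times> 's2::finite) pmf"
    and W :: "'s1 \<Rightarrow> 's2 \<Rightarrow> 'x::finite \<Rightarrow> ('y1::finite \<times> 'y2::finite) pmf"
    and d2 :: "'s2 \<Rightarrow> 'e2::finite \<Rightarrow> real"
  assumes b: "bayes_est (map_pmf (\<lambda>c. ((sA c, sX c, sY1 c, sY2 c), sS2 c)) (joint1 PS W P)) d2 e2"
  shows "measure_pmf.expectation (joint1 PS W P) (\<lambda>c. d2 (sS2 c) (e2 (sA c, sX c, sY1 c, sY2 c)))
       = measure_pmf.expectation (joint1 PS W P) (RhoG PS W snd d2)"
proof -
  have "measure_pmf.expectation (map_pmf (\<lambda>c. ((sA c, sX c, sY1 c, sY2 c), sS2 c)) (joint1 PS W P)) (\<lambda>(v, s). d2 s (e2 v))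
     = measure_pmf.expectation (map_pmf fst (map_pmf (\<lambda>c. ((sA c, sX c, sY1 c, sY2 c), sS2 c)) (joint1 PS W P)))
         (\<lambda>v. rhoK ((\<lambda>(a, x, y1, y2). map_pmf snd (bpost (kap PS W a x) (y1, y2))) v) d2)"
    by (rule bayes_val_gen[OF kf_Jd2 _ b]) simp
  then show ?thesis unfolding RhoG_def[abs_def] by (simp add: map_pmf_comp)
qed

lemma xlogx_cont: "continuous_on {0..} (\<lambda>x::real. x * log 2 x)"
  unfolding continuous_on_def
proof (intro ballI)
  fix x :: real assume x: "x \<in> {0..}"
  show "((\<lambda>x. x * log 2 x) \<longlongrightarrow> x * log 2 x) (at x within {0..})"
  proof (cases "x = 0")
    case True
    have "((\<lambda>x::real. x * log 2 x) \<longlongrightarrow> 0) (at_right 0)"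
      unfolding log_def by real_asymp
    then show ?thesis using True by (simp add: at_within_Ici_at_right)
  next
    case False
    then have "x > 0" using x by simp
    then have "((\<lambda>x. x * log 2 x) \<longlongrightarrow> x * log 2 x) (at x)"
      by (intro tendsto_intros) auto
    then show ?thesis by (rule tendsto_within_subset) simp
  qed
qed

lemma ent_univ: "ent (p :: 'v::finite pmf) = - (\<Sum>v\<in>UNIV. pmf p v * log 2 (pmf p v))"
  unfolding ent_def by (intro arg_cong[where f=uminus] sum.mono_neutral_left) (auto simp: set_pmf_eq)

lemma ent_conv:
  fixes pN :: "nat \<Rightarrow> 'v::finite pmf"
  assumes "\<And>v. ((\<lambda>N. pmf (pN N) v) \<longlonglongrightarrow> pmf p v)"
  shows "(\<lambda>N. ent (pN N)) \<longlonglongrightarrow> ent p"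
proof -
  have c: "(\<lambda>N. pmf (pN N) v * log 2 (pmf (pN N) v)) \<longlonglongrightarrow> pmf p v * log 2 (pmf p v)" for v
    using continuous_on_tendsto_compose[OF xlogx_cont assms[of v]] by (simp add: pmf_nonneg)
  show ?thesis unfolding ent_univ by (intro tendsto_minus tendsto_sum c)
qed


lemma pmf_bind_fin:
  fixes P :: "'b::finite pmf"
  shows "pmf (bind_pmf P N) v = (\<Sum>x\<in>UNIV. pmf P x * pmf (N x) v)"
  unfolding pmf_bind by (subst integral_measure_pmf_real[where A=UNIV]) (auto simp: mult.commute)

lemma joint1_dec: "joint1 PS W Q = bind_pmf Q (\<lambda>ax. joint1 PS W (return_pmf ax))"
  using joint1_bind[of PS W Q return_pmf] by (simp add: bind_return_pmf')

context
  fixes PS :: "'a::finite \<Rightarrow> ('s1::finite \<times> 's2::finite) pmf"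
    and W :: "'s1 \<Rightarrow> 's2 \<Rightarrow> 'x::finite \<Rightarrow> ('y1::finite \<times> 'y2::finite) pmf"
    and PN :: "nat \<Rightarrow> ('a \<times> 'x) pmf" and P :: "('a \<times> 'x) pmf"
  assumes conv: "\<And>ax. (\<lambda>N. pmf (PN N) ax) \<longlonglongrightarrow> pmf P ax"
begin

lemma map_joint_conv:
  "(\<lambda>N. pmf (map_pmf F (joint1 PS W (PN N))) v) \<longlonglongrightarrow> pmf (map_pmf F (joint1 PS W P)) v"
proof -
  define cc where "cc ax = pmf (map_pmf F (joint1 PS W (return_pmf ax))) v" for ax
  have e: "pmf (map_pmf F (joint1 PS W Q)) v = (\<Sum>ax\<in>UNIV. pmf Q ax * cc ax)" for Q
    unfolding cc_def by (subst joint1_dec) (simp add: map_bind_pmf pmf_bind_fin)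
  show ?thesis unfolding e by (intro tendsto_sum tendsto_mult_right conv)
qed

lemma ent_joint_conv:
  fixes F :: "('a,'x,'s1,'s2,'y1,'y2) sym \<Rightarrow> 'v::finite"
  shows "(\<lambda>N. ent (map_pmf F (joint1 PS W (PN N)))) \<longlonglongrightarrow> ent (map_pmf F (joint1 PS W P))"
  by (rule ent_conv) (rule map_joint_conv)

lemma exp_joint_conv:
  fixes R :: "('a,'x,'s1,'s2,'y1,'y2) sym \<Rightarrow> real"
  shows "(\<lambda>N. measure_pmf.expectation (joint1 PS W (PN N)) R) \<longlonglongrightarrow> measure_pmf.expectation (joint1 PS W P) R"
proof -
  have c: "(\<lambda>N. pmf (joint1 PS W (PN N)) c) \<longlonglongrightarrow> pmf (joint1 PS W P) c" for c
    using map_joint_conv[of "\<lambda>x. x" c] by simp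
  show ?thesis unfolding expect_univ by (intro tendsto_sum tendsto_mult_right c)
qed

lemma G1_conv: "(\<lambda>N. G1 PS W (joint1 PS W (PN N))) \<longlonglongrightarrow> G1 PS W (joint1 PS W P)"
  unfolding G1_def by (intro tendsto_diff ent_joint_conv exp_joint_conv)

lemma G2_conv: "(\<lambda>N. G2 PS W (joint1 PS W (PN N))) \<longlonglongrightarrow> G2 PS W (joint1 PS W P)"
  unfolding G2_def by (intro tendsto_diff ent_joint_conv exp_joint_conv)

end

lemma pmf_seq_compact:
  fixes PN :: "nat \<Rightarrow> ('b::finite) pmf"
  shows "\<exists>r P. strict_mono r \<and> (\<forall>b. (\<lambda>N. pmf (PN (r N)) b) \<longlonglongrightarrow> pmf P b)"
proof -
  define v where "v N = (\<chi> b. pmf (PN N) b)" for N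
  have "range v \<subseteq> cbox 0 (\<chi> b. 1)"
  proof
    fix z assume "z \<in> range v"
    then obtain N where z: "z = v N" by auto
    show "z \<in> cbox 0 (\<chi> b. 1)" unfolding mem_box_cart z v_def by (simp add: pmf_le_1)
  qed
  then have "bounded (range v)" using bounded_cbox bounded_subset by blast
  then obtain l r where r: "strict_mono r" and lim: "(v \<circ> r) \<longlonglongrightarrow> l"
    using bounded_imp_convergent_subsequence by blast
  have limb: "(\<lambda>N. pmf (PN (r N)) b) \<longlonglongrightarrow> l $ b" for b
    using tendsto_vec_nth[OF lim, of b] by (simp add: v_def o_def)
  have nn: "0 \<le> l $ b" for b
    by (rule LIMSEQ_le_const[OF limb]) (simp add: pmf_nonneg)
  have s1: "(\<Sum>b\<in>UNIV. l $ b) = 1"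
  proof -
    have a: "(\<lambda>N. \<Sum>b\<in>UNIV. pmf (PN (r N)) b) \<longlonglongrightarrow> (\<Sum>b\<in>UNIV. l $ b)"
      by (intro tendsto_sum limb)
    have "(\<Sum>b\<in>UNIV. pmf (PN (r N)) b) = 1" for N
      using sum_pmf_eq_1[of UNIV "PN (r N)"] by simp
    then have "(\<lambda>N. \<Sum>b\<in>UNIV. pmf (PN (r N)) b) = (\<lambda>N. 1)" by (rule ext)
    with a have "(\<lambda>N. 1::real) \<longlonglongrightarrow> (\<Sum>b\<in>UNIV. l $ b)" by simp
    then show ?thesis by (simp add: LIMSEQ_const_iff)
  qed
  define P where "P = embed_pmf (\<lambda>b. l $ b)"
  have int1: "(\<integral>\<^sup>+ x. ennreal (l $ x) \<partial>count_space UNIV) = 1"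
  proof -
    have "(\<integral>\<^sup>+ x. ennreal (l $ x) \<partial>count_space UNIV) = (\<Sum>x\<in>UNIV. ennreal (l $ x))"
      by (rule nn_integral_count_space_finite) simp
    also have "\<dots> = ennreal (\<Sum>x\<in>UNIV. l $ x)" using nn by (rule sum_ennreal)
    finally show ?thesis using s1 by simp
  qed
  have pP: "pmf P b = l $ b" for b
    unfolding P_def by (rule pmf_embed_pmf[OF nn int1])
  show ?thesis using r limb pP by (intro exI[of _ r] exI[of _ P]) auto
qed


lemma code_step:
  fixes PS :: "'a::finite \<Rightarrow> ('s1::finite \<times> 's2::finite) pmf"
    and W :: "'s1 \<Rightarrow> 's2 \<Rightarrow> 'x::finite \<Rightarrow> ('y1::finite \<times> 'y2::finite) pmf"
    and d1 :: "'s1 \<Rightarrow> 'e1::finite \<Rightarrow> real"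
    and d2 :: "'s2 \<Rightarrow> 'e2::finite \<Rightarrow> real"
  assumes ach: "achievable PS W d1 d2 (R', D1', D2')" and dpos: "0 < \<delta>" and dle: "\<delta> \<le> 1"
  shows "\<exists>P Pe. 0 \<le> Pe \<and> Pe \<le> \<delta>
     \<and> (1 - \<delta>) * (R' - \<delta>) \<le> max (\<delta> + hb Pe) 0 + G1 PS W (joint1 PS W P)
     \<and> (1 - \<delta>) * (R' - \<delta>) \<le> max (hb Pe) 0 + G2 PS W (joint1 PS W P)
     \<and> measure_pmf.expectation (joint1 PS W P) (RhoG PS W fst d1) \<le> D1' + \<delta>
     \<and> measure_pmf.expectation (joint1 PS W P) (RhoG PS W snd d2) \<le> D2' + \<delta>"
proof -
  obtain n K PT f g dec est1 est2 where
      n1: "n \<ge> 1" and K1: "K \<ge> 1"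
    and rate: "log 2 (real K) / real n \<ge> R' - \<delta>"
    and err: "measure_pmf.prob (code_dist PS W n K PT f g) {(m, tk, h). dec (map sY1 h) (map sS1 h) \<noteq> m} \<le> \<delta>"
    and sec: "minf (map_pmf (\<lambda>(m, tk, h). (m, (map sY2 h, map sS2 h))) (code_dist PS W n K PT f g)) \<le> \<delta>"
    and dist1: "measure_pmf.expectation (code_dist PS W n K PT f g) (\<lambda>(m, tk, h). seq_dist n d1 (\<lambda>i. sS1 (h ! i))
            (\<lambda>i. est1 i (map sX h) (map sA h) (map sY1 h) (map sY2 h))) \<le> D1' + \<delta>"
    and dist2: "measure_pmf.expectation (code_dist PS W n K PT f g) (\<lambda>(m, tk, h). seq_dist n d2 (\<lambda>i. sS2 (h ! i))
            (\<lambda>i. est2 i (map sX h) (map sA h) (map sY1 h) (map sY2 h))) \<le> D2' + \<delta>"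
    using ach dpos unfolding achievable_def Let_def by fastforce
  have K: "K > 0" and n: "n > 0" using n1 K1 by auto
  define Pe where "Pe = measure_pmf.prob (code_dist PS W n K PT f g) {(m, tk, h). dec (map sY1 h) (map sS1 h) \<noteq> m}"
  define Pb where "Pb = bind_pmf (pmf_of_set {..<n}) (\<lambda>i. Pl PS W f g K PT n i)"
  define L where "L = log 2 (real K)"
  have L0: "L \<ge> 0" unfolding L_def using K1 by simp
  have Pe0: "0 \<le> Pe" unfolding Pe_def by simp
  have Pele: "Pe \<le> \<delta>" unfolding Pe_def by (rule err)
  have bs: "L \<le> minf (map_pmf (\<lambda>(m, tk, h). (m, (map sY2 h, map sS2 h))) (code_dist PS W n K PT f g)) + hb Pe + Pe * L
      + real n * G1 PS W (joint1 PS W Pb)"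
    unfolding L_def Pe_def Pb_def by (rule bound_sec[OF K n])
  have br: "L \<le> hb Pe + Pe * L + real n * G2 PS W (joint1 PS W Pb)"
    unfolding L_def Pe_def Pb_def by (rule bound_rel[OF K n])
  have PeL: "Pe * L \<le> \<delta> * L" using Pele L0 by (rule mult_right_mono)
  have nr: "real n \<ge> 1" using n1 by simp
  have key: "(1 - \<delta>) * (R' - \<delta>) \<le> max c 0 + G"
    if h: "(1 - \<delta>) * L \<le> c + real n * G" for c G
  proof -
    have "(1 - \<delta>) * (R' - \<delta>) \<le> (1 - \<delta>) * (L / real n)"
      using rate dle unfolding L_def by (intro mult_left_mono) auto
    also have "\<dots> = ((1 - \<delta>) * L) / real n" by simp
    also have "\<dots> \<le> (c + real n * G) / real n" using h nr by (intro divide_right_mono) auto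
    also have "\<dots> = c / real n + G" using nr by (simp add: add_divide_distrib)
    also have "c / real n \<le> max c 0"
    proof (cases "c \<ge> 0")
      case True
      have "c * 1 \<le> c * real n" using True nr by (intro mult_left_mono) auto
      then have "c / real n \<le> c" using nr by (simp add: divide_le_eq)
      then show ?thesis by simp
    next
      case False
      then have "c / real n \<le> 0" using nr by (simp add: divide_nonpos_pos)
      then show ?thesis by simp
    qed
    finally show ?thesis by simp
  qed
  have a: "(1 - \<delta>) * (R' - \<delta>) \<le> max (\<delta> + hb Pe) 0 + G1 PS W (joint1 PS W Pb)"
    by (rule key) (use bs sec PeL in \<open>simp add: algebra_simps\<close>)
  have b: "(1 - \<delta>) * (R' - \<delta>) \<le> max (hb Pe) 0 + G2 PS W (joint1 PS W Pb)"
    by (rule key) (use br PeL in \<open>simp add: algebra_simps\<close>)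
  have c: "measure_pmf.expectation (joint1 PS W Pb) (RhoG PS W fst d1) \<le> D1' + \<delta>"
    using bound_dist[OF K n, of PS W f g PT fst d1 est1] dist1 unfolding Pb_def by simp
  have d: "measure_pmf.expectation (joint1 PS W Pb) (RhoG PS W snd d2) \<le> D2' + \<delta>"
    using bound_dist[OF K n, of PS W f g PT snd d2 est2] dist2 unfolding Pb_def by simp
  show ?thesis using a b c d Pe0 Pele by blast
qed


lemma hb_conv:
  assumes p: "p \<longlonglongrightarrow> 0" and p0: "\<And>N. 0 \<le> p N" and p1: "\<And>N. p N \<le> 1"
  shows "(\<lambda>N. hb (p N)) \<longlonglongrightarrow> 0"
proof -
  have a: "(\<lambda>N. p N * log 2 (p N)) \<longlonglongrightarrow> 0 * log 2 0"
    by (rule continuous_on_tendsto_compose[OF xlogx_cont p]) (auto simp: p0)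
  have q: "(\<lambda>N. 1 - p N) \<longlonglongrightarrow> 1" using tendsto_diff[OF tendsto_const p, of 1] by simp
  have b: "(\<lambda>N. (1 - p N) * log 2 (1 - p N)) \<longlonglongrightarrow> 1 * log 2 1"
    by (rule continuous_on_tendsto_compose[OF xlogx_cont q]) (auto simp: p1)
  have "(\<lambda>N. hb (p N)) \<longlonglongrightarrow> - (0 * log 2 0 + 1 * log 2 1)"
    unfolding hb_def by (intro tendsto_minus tendsto_add a b)
  then show ?thesis by simp
qed

theorem mainTheorem7:
  fixes PS :: "'a::finite \<Rightarrow> ('s1::finite \<times> 's2::finite) pmf"
    and W :: "'s1 \<Rightarrow> 's2 \<Rightarrow> 'x::finite \<Rightarrow> ('y1::finite \<times> 'y2::finite) pmf"
    and d1 :: "'s1 \<Rightarrow> 'e1::finite \<Rightarrow> real"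
    and d2 :: "'s2 \<Rightarrow> 'e2::finite \<Rightarrow> real"
    and R D1 D2 :: real
  assumes "\<forall>s e. 0 \<le> d1 s e" and "\<forall>s e. 0 \<le> d2 s e"
    and "(R, D1, D2) \<in> R_Act PS W d1 d2"
  shows "\<exists>P :: ('a \<times> 'x) pmf. let J = joint1 PS W P in
     R \<le> cent (map_pmf (\<lambda>c. ((sY1 c, sS1 c), (sY2 c, sS2 c))) J)
          - cent (map_pmf (\<lambda>c. (sS1 c, (sY1 c, sY2 c, sS2 c, sX c, sA c))) J) \<and>
     R \<le> minf (map_pmf (\<lambda>c. ((sX c, sA c), (sY1 c, sS1 c))) J) \<and>
     (\<forall>e1. bayes_est (map_pmf (\<lambda>c. ((sA c, sX c, sY1 c, sY2 c), sS1 c)) J) d1 e1 \<longrightarrow>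
        D1 \<ge> measure_pmf.expectation J (\<lambda>c. d1 (sS1 c) (e1 (sA c, sX c, sY1 c, sY2 c)))) \<and>
     (\<forall>e2. bayes_est (map_pmf (\<lambda>c. ((sA c, sX c, sY1 c, sY2 c), sS2 c)) J) d2 e2 \<longrightarrow>
        D2 \<ge> measure_pmf.expectation J (\<lambda>c. d2 (sS2 c) (e2 (sA c, sX c, sY1 c, sY2 c))))"
proof -
  from assms(3) obtain X where X: "\<And>N. achievable PS W d1 d2 (X N)" and Xlim: "X \<longlonglongrightarrow> (R, D1, D2)"
    unfolding R_Act_def closure_sequential by auto
  define dl where "dl N = 1 / (real N + 2)" for N :: nat
  have dl0: "0 < dl N" and dl1: "dl N \<le> 1" for N unfolding dl_def by auto
  have dllim: "dl \<longlonglongrightarrow> 0"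
  proof -
    have "(\<lambda>N. 1 / (real N + 2)) \<longlonglongrightarrow> 0"
      by real_asymp
    then show ?thesis unfolding dl_def[abs_def] .
  qed
  define Qp where "Qp N z \<longleftrightarrow> 0 \<le> snd z \<and> snd z \<le> dl N
     \<and> (1 - dl N) * (fst (X N) - dl N) \<le> max (dl N + hb (snd z)) 0 + G1 PS W (joint1 PS W (fst z))
     \<and> (1 - dl N) * (fst (X N) - dl N) \<le> max (hb (snd z)) 0 + G2 PS W (joint1 PS W (fst z))
     \<and> measure_pmf.expectation (joint1 PS W (fst z)) (RhoG PS W fst d1) \<le> fst (snd (X N)) + dl N
     \<and> measure_pmf.expectation (joint1 PS W (fst z)) (RhoG PS W snd d2) \<le> snd (snd (X N)) + dl N" for N z
  have ex: "\<exists>z. Qp N z" for N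
  proof -
    obtain R' D1' D2' where XN: "X N = (R', D1', D2')" by (cases "X N") auto
    from code_step[OF X[of N, unfolded XN] dl0 dl1] show ?thesis
      unfolding Qp_def XN by auto
  qed
  then obtain Z where Z: "\<And>N. Qp N (Z N)" by metis
  obtain r Ps where r: "strict_mono r" and conv: "\<And>b. (\<lambda>N. pmf (fst (Z (r N))) b) \<longlonglongrightarrow> pmf Ps b"
    using pmf_seq_compact[of "\<lambda>N. fst (Z N)"] by blast
  have sub: "(\<lambda>N. f (r N)) \<longlonglongrightarrow> l" if "f \<longlonglongrightarrow> l" for f :: "nat \<Rightarrow> real" and l
    using LIMSEQ_subseq_LIMSEQ[OF that r] by (simp add: o_def)
  have Rl: "(\<lambda>N. fst (X N)) \<longlonglongrightarrow> R" using tendsto_fst[OF Xlim] by simp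
  have D1l: "(\<lambda>N. fst (snd (X N))) \<longlonglongrightarrow> D1" using tendsto_fst[OF tendsto_snd[OF Xlim]] by simp
  have D2l: "(\<lambda>N. snd (snd (X N))) \<longlonglongrightarrow> D2" using tendsto_snd[OF tendsto_snd[OF Xlim]] by simp
  have dlr: "(\<lambda>N. dl (r N)) \<longlonglongrightarrow> 0" by (rule sub[OF dllim])
  have Pe0: "0 \<le> snd (Z (r N))" and Pe1: "snd (Z (r N)) \<le> dl (r N)" for N
    using Z[of "r N"] unfolding Qp_def by auto
  have Pel: "(\<lambda>N. snd (Z (r N))) \<longlonglongrightarrow> 0"
    by (rule tendsto_sandwich[OF _ _ tendsto_const dlr]) (auto simp: Pe0 Pe1)
  have hbl: "(\<lambda>N. hb (snd (Z (r N)))) \<longlonglongrightarrow> 0"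
    by (rule hb_conv[OF Pel Pe0]) (use Pe1 dl1 order_trans in blast)
  have lhs: "(\<lambda>N. (1 - dl (r N)) * (fst (X (r N)) - dl (r N))) \<longlonglongrightarrow> (1 - 0) * (R - 0)"
    by (intro tendsto_intros dlr sub[OF Rl])
  have G1l: "(\<lambda>N. G1 PS W (joint1 PS W (fst (Z (r N))))) \<longlonglongrightarrow> G1 PS W (joint1 PS W Ps)"
    by (rule G1_conv[OF conv])
  have G2l: "(\<lambda>N. G2 PS W (joint1 PS W (fst (Z (r N))))) \<longlonglongrightarrow> G2 PS W (joint1 PS W Ps)"
    by (rule G2_conv[OF conv])
  have m1: "(\<lambda>N. max (dl (r N) + hb (snd (Z (r N)))) 0) \<longlonglongrightarrow> max (0 + 0) 0"
    by (intro tendsto_max tendsto_add dlr hbl tendsto_const)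
  have m2: "(\<lambda>N. max (hb (snd (Z (r N)))) 0) \<longlonglongrightarrow> max 0 0"
    by (intro tendsto_max hbl tendsto_const)
  have RG1: "R \<le> G1 PS W (joint1 PS W Ps)"
  proof -
    have "(1 - 0) * (R - 0) \<le> max (0 + 0) 0 + G1 PS W (joint1 PS W Ps)"
      by (rule LIMSEQ_le[OF lhs tendsto_add[OF m1 G1l]]) (use Z in \<open>auto simp: Qp_def\<close>)
    then show ?thesis by simp
  qed
  have RG2: "R \<le> G2 PS W (joint1 PS W Ps)"
  proof -
    have "(1 - 0) * (R - 0) \<le> max 0 0 + G2 PS W (joint1 PS W Ps)"
      by (rule LIMSEQ_le[OF lhs tendsto_add[OF m2 G2l]]) (use Z in \<open>auto simp: Qp_def\<close>)
    then show ?thesis by simp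
  qed
  have DD1: "measure_pmf.expectation (joint1 PS W Ps) (RhoG PS W fst d1) \<le> D1"
  proof -
    have "measure_pmf.expectation (joint1 PS W Ps) (RhoG PS W fst d1) \<le> D1 + 0"
      by (rule LIMSEQ_le[OF exp_joint_conv[OF conv] tendsto_add[OF sub[OF D1l] dlr]]) (use Z in \<open>auto simp: Qp_def\<close>)
    then show ?thesis by simp
  qed
  have DD2: "measure_pmf.expectation (joint1 PS W Ps) (RhoG PS W snd d2) \<le> D2"
  proof -
    have "measure_pmf.expectation (joint1 PS W Ps) (RhoG PS W snd d2) \<le> D2 + 0"
      by (rule LIMSEQ_le[OF exp_joint_conv[OF conv] tendsto_add[OF sub[OF D2l] dlr]]) (use Z in \<open>auto simp: Qp_def\<close>)
    then show ?thesis by simp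
  qed
  show ?thesis
    unfolding Let_def
    using RG1 RG2 DD1 DD2 F1_G1[of PS W Ps] F2_G2[of PS W Ps] bayes_J[of PS W Ps d1] bayes_J2[of PS W Ps d2]
    by (intro exI[of _ Ps]) auto
qed


end
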